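(* For every $u\in\mathrm{NSym}$: (1) $Z(\alpha_+^*(u))=B_-(\Pi(Z(u)))$; (2) $Z(\alpha_-^*(u))=Z(u)\circ\epsilon_1=Z(u)\circ\ell_2$.
   Context: $k$ is a field of characteristic $0$. $\mathrm{NSym}=k\langle E_1,E_2,\dots\rangle$ is the free associative algebra with $\deg E_i=i$. $\alpha_+^*:\mathrm{NSym}\to\mathrm{NSym}$ is the linear map with $\alpha_+^*(E_{j_1}E_{j_2}\cdots E_{j_k})=E_{j_1}\cdots E_{j_{k-1}}$ if $j_k=1$ and $0$ otherwise (and $\alpha_+^*(1)=0$); $\alpha_-^*:\mathrm{NSym}\to\mathrm{NSym}$ is $\alpha_-^*(u)=uE_1$. (These are the duals, under the pairing $\langle E_I,M_J\rangle=\delta_{I,J}$ with quasi-symmetric functions, of $M_I\mapsto M_{I\sqcup(1)}$ and of $M_{(a_1,\dots,a_k)}\mapsto M_{(a_1,\dots,a_{k-1})}$ if $a_k=1$, $0$ otherwise.) A rooted tree is a finite poset with a unique maximal element (root) such that for each vertex the set of vertices exceeding it is a chain; $|t|$ is its number of vertices and $\mathrm{Sym}(t)$ its automorphism group. For a forest (commutative monomial of rooted trees) $t_1\cdots t_k$, $B_+(t_1\cdots t_k)$ is the rooted tree obtained by adjoining a new root whose children are the roots of $t_1,\dots,t_k$; $B_+(1)=\bullet$. Ladders: $\ell_i=B_+^{i-1}(\bullet)$, so $\ell_2$ is the two-vertex tree. $k\mathcal{T}$ is the vector space with basis the rooted trees, with Grossman–Larson product $\circ$: for $t=B_+(t_1\cdots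 t_n)$ and $t'$ with $m$ vertices, $t\circ t'$ is the sum of the $m^n$ rooted trees obtained by attaching each $t_i$ to some vertex of $t'$ (root of $t_i$ becoming a child of that vertex), and $\bullet\circ t'=t'$. $\Pi:k\mathcal{T}\to k\mathcal{T}$ is the linear projection with $\Pi(t)=t$ if the root of $t$ has exactly one child (i.e. $t=B_+(t')$ for a rooted tree $t'$) and $\Pi(t)=0$ otherwise; $B_-$ is the linear map on the span of such trees with $B_-(B_+(t'))=t'$. Let $\kappa_n=\sum_{t:\,|t|=n+1}t/|\mathrm{Sym}(t)|$, $\epsilon_0=\bullet$, $\epsilon_n=\kappa_1\circ\epsilon_{n-1}-\kappa_2\circ\epsilon_{n-2}+\dots+(-1)^{n-1}\kappa_n$ for $n\ge1$. $Z:\mathrm{NSym}\to k\mathcal{T}$ is the algebra homomorphism (for $\circ$) with $Z(E_n)=\epsilon_n$. *)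

theory Defs
  imports Main "HOL-Library.Multiset" "HOL-Library.Sublist"
begin

text \<open>An (unlabelled, non-planar) rooted tree is a root together with the multiset
of its subtrees; this datatype represents rooted trees up to isomorphism.\<close>
datatype rtree = Node "rtree multiset"

abbreviation bullet :: rtree where "bullet \<equiv> Node {#}"

primrec tsize :: "rtree \<Rightarrow> nat" where
  "tsize (Node N) = Suc (sum_mset (image_mset tsize N))"

definition Bplus :: "rtree multiset \<Rightarrow> rtree" where
  "Bplus F = Node F"

definition ladder :: "nat \<Rightarrow> rtree" where
  "ladder i = ((Bplus \<circ> (\<lambda>t. {#t#})) ^^ (i - 1)) bullet"

datatype ptree = P "ptree list"

primrec forget :: "ptree \<Rightarrow> rtree" where
  "forget (P xs) = Node (mset (map forget xs))"

text \<open>Vertices of a plane tree are addresses (paths of child indices from the root).\<close>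
fun valid_addr :: "ptree \<Rightarrow> nat list \<Rightarrow> bool" where
  "valid_addr t [] = True"
| "valid_addr (P xs) (i # a) = (i < length xs \<and> valid_addr (xs ! i) a)"

definition pverts :: "ptree \<Rightarrow> nat list set" where
  "pverts p = {a. valid_addr p a}"

text \<open>Poset order on vertices: v \<le> w iff w lies on the path from v to the root,
i.e. the address of w is a prefix of that of v (the root is the maximum).\<close>
definition vle :: "nat list \<Rightarrow> nat list \<Rightarrow> bool" where
  "vle v w = prefix w v"

definition paut :: "ptree \<Rightarrow> (nat list \<Rightarrow> nat list) set" where
  "paut p = {f. bij_betw f (pverts p) (pverts p) \<and> (\<forall>a. a \<notin> pverts p \<longrightarrow> f a = a)
              \<and> (\<forall>v\<in>pverts p. \<forall>w\<in>pverts p. vle v w \<longleftrightarrow> vle (f v) (f w))}"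

definition plane_rep :: "rtree \<Rightarrow> ptree" where
  "plane_rep t = (SOME p. forget p = t)"

text \<open>|Sym(t)|: number of order automorphisms of the poset of vertices of t.\<close>
definition sym_card :: "rtree \<Rightarrow> nat" where
  "sym_card t = card (paut (plane_rep t))"

text \<open>Elements of kT are finitely supported functions rtree \<Rightarrow> 'k (coefficients).\<close>
type_synonym 'k kT = "rtree \<Rightarrow> 'k"

definition finsupp :: "('a \<Rightarrow> 'k::zero) \<Rightarrow> bool" where
  "finsupp x = finite {a. x a \<noteq> 0}"

definition basis :: "rtree \<Rightarrow> 'k::zero_neq_one kT" where
  "basis t = (\<lambda>r. if r = t then 1 else 0)"

text \<open>Auxiliary trees whose vertices are flagged as old (True) / new (False).\<close>
datatype ftree = FNode bool "ftree multiset"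

primrec mark :: "bool \<Rightarrow> rtree \<Rightarrow> ftree" where
  "mark b (Node N) = FNode b (image_mset (mark b) N)"

primrec unmark :: "ftree \<Rightarrow> rtree" where
  "unmark (FNode b N) = Node (image_mset unmark N)"

function ins :: "ftree \<Rightarrow> ftree \<Rightarrow> ftree multiset" where
  "ins s (FNode b N) =
     (if b then {# FNode b (add_mset s N) #} else {#}) +
     sum_mset (image_mset (\<lambda>c. if c \<in># N then
        image_mset (\<lambda>c'. FNode b (add_mset c' (N - {#c#}))) (ins s c) else {#}) N)"
  by pat_completeness auto
termination
  by (relation "measure (\<lambda>(s, t). size t)")
     (auto simp: size_multiset_overloaded_eq intro: le_imp_less_Suc
               elim!: sum_mset.remove[THEN ssubst] dest!: multi_member_split)

text \<open>Multiset of trees obtained from t and t' = B_+(t_1...t_n) \<circ> t': each t_i is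
attached to some vertex of t' (m^n results, counted with multiplicity).\<close>
definition gl_trees :: "rtree \<Rightarrow> rtree \<Rightarrow> rtree multiset" where
  "gl_trees t t' = (case t of Node C \<Rightarrow>
     image_mset unmark
       (fold_mset (\<lambda>s R. sum_mset (image_mset (ins (mark False s)) R)) {# mark True t' #} C))"

definition gl :: "'k::field kT \<Rightarrow> 'k kT \<Rightarrow> 'k kT" (infixl "\<circ>\<^sub>G\<^sub>L" 70) where
  "gl x y = (\<lambda>r. \<Sum>t\<in>{t. x t \<noteq> 0}. \<Sum>t'\<in>{t'. y t' \<noteq> 0}.
                   x t * y t' * of_nat (count (gl_trees t t') r))"

definition Pi_proj :: "'k::zero kT \<Rightarrow> 'k kT" where
  "Pi_proj x = (\<lambda>r. if (\<exists>t'. r = Node {#t'#}) then x r else 0)"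

text \<open>B_-(B_+(t')) = t', on the span of trees whose root has one child.\<close>
definition Bminus :: "'k::zero kT \<Rightarrow> 'k kT" where
  "Bminus y = (\<lambda>r. y (Node {#r#}))"

definition kappa :: "nat \<Rightarrow> 'k::field kT" where
  "kappa n = (\<lambda>t. if tsize t = n + 1 then 1 / of_nat (sym_card t) else 0)"

fun eps :: "nat \<Rightarrow> 'k::field kT" where
  "eps n = (if n = 0 then basis bullet
            else (\<lambda>r. \<Sum>j<n. (-1) ^ (n - j - 1) * (gl (kappa (n - j)) (eps j)) r))"

text \<open>An element of NSym: finitely supported coefficient function on words
(j_1,...,j_k) (all j_i \<ge> 1), the word standing for E_{j_1}...E_{j_k}.\<close>
definition is_nsym :: "(nat list \<Rightarrow> 'k::zero) \<Rightarrow> bool" where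
  "is_nsym u \<longleftrightarrow> finsupp u \<and> (\<forall>w. u w \<noteq> 0 \<longrightarrow> (\<forall>j\<in>set w. 1 \<le> j))"

definition alpha_plus :: "(nat list \<Rightarrow> 'k::zero) \<Rightarrow> (nat list \<Rightarrow> 'k)" where
  "alpha_plus u = (\<lambda>w. u (w @ [1]))"

definition alpha_minus :: "(nat list \<Rightarrow> 'k::zero) \<Rightarrow> (nat list \<Rightarrow> 'k)" where
  "alpha_minus u = (\<lambda>w. if w \<noteq> [] \<and> last w = 1 then u (butlast w) else 0)"

definition Z_word :: "nat list \<Rightarrow> 'k::field kT" where
  "Z_word w = foldr (\<lambda>j acc. gl (eps j) acc) w (basis bullet)"

definition Z :: "(nat list \<Rightarrow> 'k::field) \<Rightarrow> 'k kT" where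
  "Z u = (\<lambda>r. \<Sum>w\<in>{w. u w \<noteq> 0}. u w * Z_word w r)"

end

theory Submission
  imports Defs "HOL-Combinatorics.List_Permutation"
begin

datatype 'a gt = G 'a "'a gt multiset"

function insg :: "('a \<Rightarrow> bool) \<Rightarrow> 'a gt \<Rightarrow> 'a gt \<Rightarrow> 'a gt multiset" where
  "insg pr s (G b N) =
     (if pr b then {# G b (add_mset s N) #} else {#}) +
     sum_mset (image_mset (\<lambda>c. if c \<in># N then
        image_mset (\<lambda>c'. G b (add_mset c' (N - {#c#}))) (insg pr s c) else {#}) N)"
  by pat_completeness auto
termination
  by (relation "measure (\<lambda>(pr, s, t). size t)")
     (auto simp: size_multiset_overloaded_eq intro: le_imp_less_Suc
               elim!: sum_mset.remove[THEN ssubst] dest!: multi_member_split)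

declare insg.simps[simp del]

definition insF :: "('a \<Rightarrow> bool) \<Rightarrow> 'a gt \<Rightarrow> 'a gt multiset \<Rightarrow> 'a gt multiset multiset" where
  "insF pr s N = (\<Sum>c\<in>#N. image_mset (\<lambda>c'. add_mset c' (N - {#c#})) (insg pr s c))"

lemma image_sum_mset: "image_mset f (sum_mset M) = sum_mset (image_mset (image_mset f) M)"
  by (induct M) auto

lemma sum_bind: "(\<Sum>z\<in>#(\<Sum>y\<in>#A. F y). g z) = (\<Sum>y\<in>#A. \<Sum>z\<in>#F y. g z)"
  by (induct A) auto

lemma insg_eq: "insg pr s (G b N) = (if pr b then {# G b (add_mset s N) #} else {#}) + image_mset (G b) (insF pr s N)"
proof -
  have "(\<Sum>c\<in>#N. if c \<in># N then image_mset (\<lambda>c'. G b (add_mset c' (N - {#c#}))) (insg pr s c) else {#})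
      = (\<Sum>c\<in>#N. image_mset (G b) (image_mset (\<lambda>c'. add_mset c' (N - {#c#})) (insg pr s c)))"
    by (intro arg_cong[where f=sum_mset] image_mset_cong) (simp add: image_mset.compositionality o_def)
  then show ?thesis unfolding insF_def insg.simps[of pr s b N]
    by (simp add: image_sum_mset image_mset.compositionality o_def)
qed

lemma insF_empty[simp]: "insF pr s {#} = {#}"
  by (simp add: insF_def)

lemma insF_add: "insF pr s (add_mset c N) =
  image_mset (\<lambda>c'. add_mset c' N) (insg pr s c) + image_mset (add_mset c) (insF pr s N)"
proof -
  have "(\<Sum>c0\<in>#N. image_mset (\<lambda>c'. add_mset c' (add_mset c N - {#c0#})) (insg pr s c0))
      = (\<Sum>c0\<in>#N. image_mset (add_mset c) (image_mset (\<lambda>c'. add_mset c' (N - {#c0#})) (insg pr s c0)))"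
    by (intro arg_cong[where f=sum_mset] image_mset_cong) (simp add: image_mset.compositionality o_def add_mset_commute)
  then show ?thesis unfolding insF_def by (simp add: image_sum_mset image_mset.compositionality o_def)
qed

primrec flags :: "'a gt \<Rightarrow> 'a set" where
  "flags (G b N) = insert b (\<Union> (set_mset (image_mset flags N)))"

lemma insg_noflag: "\<forall>a\<in>flags T. \<not> pr a \<Longrightarrow> insg pr s T = {#}"
proof (induction T)
  case (G b N)
  then have "insF pr s N = {#}" unfolding insF_def
    by (intro sum_mset.neutral) auto
  then show ?case using G.prems by (simp add: insg_eq)
qed

lemma insF_cong_aux:
  assumes "\<And>c. c \<in># N \<Longrightarrow> insg pr s c = insg qr s c"
  shows "insF pr s N = insF qr s N"
  unfolding insF_def using assms by (intro arg_cong[where f=sum_mset] image_mset_cong) auto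

lemma insg_cong: "\<forall>a\<in>flags T. pr a = qr a \<Longrightarrow> insg pr s T = insg qr s T"
proof (induction T)
  case (G b N)
  then have "insF pr s N = insF qr s N" by (intro insF_cong_aux) auto
  then show ?case using G.prems by (simp add: insg_eq)
qed

lemma sum_add_mset_img: "(\<Sum>b\<in>#B. add_mset (g b) (h b)) = image_mset g B + (\<Sum>b\<in>#B. h b)"
  by (induct B) auto
lemma swap_img: "(\<Sum>a\<in>#A. image_mset (f a) B) = (\<Sum>b\<in>#B. image_mset (\<lambda>a. f a b) A)"
  by (induct A) (auto simp: sum_add_mset_img)

lemma in_insF: "M \<in># insF pr s N \<Longrightarrow> \<exists>c c'. c \<in># N \<and> c' \<in># insg pr s c \<and> M = add_mset c' (N - {#c#})"
  unfolding insF_def by auto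

lemma flags_insg: "z \<in># insg pr s T \<Longrightarrow> flags z \<subseteq> flags s \<union> flags T"
proof (induction T arbitrary: z)
  case (G b N)
  show ?case
  proof (cases "z \<in># image_mset (G b) (insF pr s N)")
    case True
    then obtain M where M: "M \<in># insF pr s N" "z = G b M" by auto
    then obtain c c' where cc: "c \<in># N" "c' \<in># insg pr s c" "M = add_mset c' (N - {#c#})"
      using in_insF by blast
    have 1: "flags c' \<subseteq> flags s \<union> flags c" using G.IH cc by blast
    have 2: "set_mset (N - {#c#}) \<subseteq> set_mset N" by (meson in_diffD subsetI)
    have "flags z = insert b (flags c' \<union> \<Union> (set_mset (image_mset flags (N - {#c#}))))"
      using M cc by simp
    also have "\<dots> \<subseteq> flags s \<union> flags (G b N)" using 1 2 cc by auto
    finally show ?thesis .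
  next
    case False
    then have "z = G b (add_mset s N)" using G.prems by (auto simp: insg_eq split: if_splits)
    then show ?thesis by auto
  qed
qed

lemma EF:
  assumes "\<And>c. c \<in># N \<Longrightarrow> (\<Sum>z\<in>#insg p1 x c. insg p2 s z) =
            (\<Sum>z\<in>#insg p2 s c. insg p1 x z) + (\<Sum>x'\<in>#insg p2 s x. insg p1 x' c)"
  shows "(\<Sum>M\<in>#insF p1 x N. insF p2 s M) =
         (\<Sum>M\<in>#insF p2 s N. insF p1 x M) + (\<Sum>x'\<in>#insg p2 s x. insF p1 x' N)"
  using assms
proof (induction N)
  case empty
  then show ?case by simp
next
  case (add c N)
  have IHN: "(\<Sum>M\<in>#insF p1 x N. insF p2 s M) =
         (\<Sum>M\<in>#insF p2 s N. insF p1 x M) + (\<Sum>x'\<in>#insg p2 s x. insF p1 x' N)"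
    using add by simp
  have Ec: "(\<Sum>z\<in>#insg p1 x c. insg p2 s z) =
            (\<Sum>z\<in>#insg p2 s c. insg p1 x z) + (\<Sum>x'\<in>#insg p2 s x. insg p1 x' c)"
    using add by simp
  have L: "(\<Sum>M\<in>#insF p1 x (add_mset c N). insF p2 s M) =
     image_mset (\<lambda>d. add_mset d N) (\<Sum>c'\<in>#insg p1 x c. insg p2 s c')
   + (\<Sum>c'\<in>#insg p1 x c. image_mset (\<lambda>M. add_mset c' M) (insF p2 s N))
   + (\<Sum>M\<in>#insF p1 x N. image_mset (\<lambda>d. add_mset d M) (insg p2 s c))
   + image_mset (add_mset c) (\<Sum>M\<in>#insF p1 x N. insF p2 s M)"
    by (simp add: insF_add sum_mset.distrib image_sum_mset image_mset.compositionality o_def add_mset_commute ac_simps)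
  have R1: "(\<Sum>M\<in>#insF p2 s (add_mset c N). insF p1 x M) =
     image_mset (\<lambda>d. add_mset d N) (\<Sum>c'\<in>#insg p2 s c. insg p1 x c')
   + (\<Sum>c'\<in>#insg p2 s c. image_mset (\<lambda>M. add_mset c' M) (insF p1 x N))
   + (\<Sum>M\<in>#insF p2 s N. image_mset (\<lambda>d. add_mset d M) (insg p1 x c))
   + image_mset (add_mset c) (\<Sum>M\<in>#insF p2 s N. insF p1 x M)"
    by (simp add: insF_add sum_mset.distrib image_sum_mset image_mset.compositionality o_def add_mset_commute ac_simps)
  have R2: "(\<Sum>x'\<in>#insg p2 s x. insF p1 x' (add_mset c N)) =
     image_mset (\<lambda>d. add_mset d N) (\<Sum>x'\<in>#insg p2 s x. insg p1 x' c)
   + image_mset (add_mset c) (\<Sum>x'\<in>#insg p2 s x. insF p1 x' N)"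
    by (simp add: insF_add sum_mset.distrib image_sum_mset image_mset.compositionality o_def)
  have S1: "(\<Sum>c'\<in>#insg p1 x c. image_mset (\<lambda>M. add_mset c' M) (insF p2 s N)) =
            (\<Sum>M\<in>#insF p2 s N. image_mset (\<lambda>d. add_mset d M) (insg p1 x c))"
    by (rule swap_img)
  have S2: "(\<Sum>M\<in>#insF p1 x N. image_mset (\<lambda>d. add_mset d M) (insg p2 s c)) =
            (\<Sum>c'\<in>#insg p2 s c. image_mset (\<lambda>M. add_mset c' M) (insF p1 x N))"
    by (rule swap_img)
  show ?case unfolding L R1 R2 S1 S2 Ec IHN by (simp add: ac_simps)
qed

lemma E:
  assumes "\<forall>a\<in>flags s. \<not> p1 a"
  shows "(\<Sum>z\<in>#insg p1 x w. insg p2 s z) =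
         (\<Sum>z\<in>#insg p2 s w. insg p1 x z) + (\<Sum>x'\<in>#insg p2 s x. insg p1 x' w)"
proof (induction w)
  case (G b N)
  have EFN: "(\<Sum>M\<in>#insF p1 x N. insF p2 s M) =
         (\<Sum>M\<in>#insF p2 s N. insF p1 x M) + (\<Sum>x'\<in>#insg p2 s x. insF p1 x' N)"
    by (rule EF) (use G in auto)
  have xs: "insg p1 x s = {#}" using assms by (rule insg_noflag)
  have L: "(\<Sum>z\<in>#insg p1 x (G b N). insg p2 s z) =
      (if p1 b \<and> p2 b then {#G b (add_mset s (add_mset x N))#} else {#})
    + (if p1 b then image_mset (\<lambda>d. G b (add_mset d N)) (insg p2 s x) else {#})
    + (if p1 b then image_mset (\<lambda>M. G b (add_mset x M)) (insF p2 s N) else {#})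
    + (if p2 b then image_mset (\<lambda>M. G b (add_mset s M)) (insF p1 x N) else {#})
    + image_mset (G b) (\<Sum>M\<in>#insF p1 x N. insF p2 s M)"
    by (simp add: insg_eq insF_add sum_mset.distrib image_sum_mset image_mset.compositionality o_def)
  have R1: "(\<Sum>z\<in>#insg p2 s (G b N). insg p1 x z) =
      (if p1 b \<and> p2 b then {#G b (add_mset x (add_mset s N))#} else {#})
    + (if p2 b then image_mset (\<lambda>M. G b (add_mset s M)) (insF p1 x N) else {#})
    + (if p1 b then image_mset (\<lambda>M. G b (add_mset x M)) (insF p2 s N) else {#})
    + image_mset (G b) (\<Sum>M\<in>#insF p2 s N. insF p1 x M)"
    by (simp add: insg_eq insF_add sum_mset.distrib image_sum_mset image_mset.compositionality o_def xs)
  have R2: "(\<Sum>x'\<in>#insg p2 s x. insg p1 x' (G b N)) =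
      (if p1 b then image_mset (\<lambda>d. G b (add_mset d N)) (insg p2 s x) else {#})
    + image_mset (G b) (\<Sum>x'\<in>#insg p2 s x. insF p1 x' N)"
    by (simp add: insg_eq sum_mset.distrib image_sum_mset image_mset.compositionality o_def)
  show ?case unfolding L R1 R2 EFN by (simp add: ac_simps add_mset_commute)
qed

definition Ins :: "('a \<Rightarrow> bool) \<Rightarrow> 'a gt \<Rightarrow> 'a gt multiset \<Rightarrow> 'a gt multiset" where
  "Ins pr s R = (\<Sum>z\<in>#R. insg pr s z)"

lemma Ins_plus[simp]: "Ins pr s (A + B) = Ins pr s A + Ins pr s B"
  by (simp add: Ins_def)
lemma Ins_empty[simp]: "Ins pr s {#} = {#}"
  by (simp add: Ins_def)
lemma Ins_single[simp]: "Ins pr s {#T#} = insg pr s T"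
  by (simp add: Ins_def)
lemma Ins_sum: "Ins pr s (sum F A) = (\<Sum>i\<in>A. Ins pr s (F i))"
  by (induct A rule: infinite_finite_induct) auto
lemma Ins_sum_mset: "Ins pr s (\<Sum>y\<in>#A. F y) = (\<Sum>y\<in>#A. Ins pr s (F y))"
  unfolding Ins_def by (rule sum_bind)

definition GRl :: "('a \<Rightarrow> bool) \<Rightarrow> 'a gt list \<Rightarrow> 'a gt \<Rightarrow> 'a gt multiset" where
  "GRl pr xs T = foldr (Ins pr) xs {#T#}"

lemma GRl_Nil[simp]: "GRl pr [] T = {#T#}"
  by (simp add: GRl_def)
lemma GRl_Cons[simp]: "GRl pr (x # xs) T = Ins pr x (GRl pr xs T)"
  by (simp add: GRl_def)

definition pfree :: "('a \<Rightarrow> bool) \<Rightarrow> 'a gt \<Rightarrow> bool" where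
  "pfree pr T \<longleftrightarrow> (\<forall>a\<in>flags T. \<not> pr a)"

lemma Ins_comm:
  assumes "pfree pr x" "pfree pr y"
  shows "Ins pr x (Ins pr y R) = Ins pr y (Ins pr x R)"
proof -
  have yx: "insg pr x y = {#}" using assms by (intro insg_noflag) (auto simp: pfree_def)
  have "(\<Sum>z\<in>#insg pr y w. insg pr x z) = (\<Sum>z\<in>#insg pr x w. insg pr y z)
     + (\<Sum>x'\<in>#insg pr x y. insg pr x' w)" for w
    by (rule E) (use assms in \<open>simp add: pfree_def\<close>)
  then have "\<And>w. (\<Sum>z\<in>#insg pr y w. insg pr x z) = (\<Sum>z\<in>#insg pr x w. insg pr y z)"
    using yx by simp
  then show ?thesis unfolding Ins_def sum_bind by simp
qed

lemma GRl_move: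
  assumes "pfree pr x" "\<forall>y\<in>set ys1. pfree pr y"
  shows "GRl pr (ys1 @ x # ys2) T = GRl pr (x # ys1 @ ys2) T"
  using assms(2)
proof (induction ys1)
  case Nil
  then show ?case by simp
next
  case (Cons y ys1)
  then have "GRl pr ((y # ys1) @ x # ys2) T = Ins pr y (Ins pr x (GRl pr (ys1 @ ys2) T))" by simp
  also have "\<dots> = Ins pr x (Ins pr y (GRl pr (ys1 @ ys2) T))"
    using Cons.prems assms(1) by (intro Ins_comm) auto
  finally show ?case by simp
qed

lemma GRl_perm:
  assumes "mset xs = mset ys" "\<forall>y\<in>set ys. pfree pr y"
  shows "GRl pr xs T = GRl pr ys T"
  using assms
proof (induction xs arbitrary: ys)
  case Nil
  then show ?case by simp
next
  case (Cons x xs)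
  have "x \<in> set ys" using Cons.prems(1) by (metis list.set_intros(1) set_mset_mset)
  then obtain ys1 ys2 where ys: "ys = ys1 @ x # ys2" by (meson split_list)
  have m: "mset xs = mset (ys1 @ ys2)" using Cons.prems(1) ys by simp
  have "GRl pr ys T = GRl pr (x # ys1 @ ys2) T"
    unfolding ys using Cons.prems(2) ys by (intro GRl_move) auto
  also have "\<dots> = GRl pr (x # xs) T"
    using Cons.IH[OF m] Cons.prems(2) ys by auto
  finally show ?case by simp
qed

lemma pfree_insg: "pfree pr s \<Longrightarrow> pfree pr c \<Longrightarrow> c' \<in># insg qr s c \<Longrightarrow> pfree pr c'"
  using flags_insg unfolding pfree_def by blast

lemma D:
  assumes "\<forall>x\<in>set xs. pfree q x" "pfree q s" "pfree p s" "pfree p T"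
  shows "(\<Sum>z\<in>#GRl q xs T. insg (\<lambda>a. p a \<or> q a) s z) =
         GRl q (s # xs) T + (\<Sum>i<length xs. \<Sum>c'\<in>#insg p s (xs ! i). GRl q (xs[i := c']) T)"
  using assms(1)
proof (induction xs)
  case Nil
  have "insg (\<lambda>a. p a \<or> q a) s T = insg q s T"
    using assms(4) by (intro insg_cong) (auto simp: pfree_def)
  then show ?case by simp
next
  case (Cons x xs)
  have xq: "pfree q x" and xsq: "\<forall>x\<in>set xs. pfree q x" using Cons.prems by auto
  let ?pq = "\<lambda>a. p a \<or> q a"
  have xpq: "insg ?pq s x = insg p s x"
    using xq by (intro insg_cong) (auto simp: pfree_def)
  have "(\<Sum>z\<in>#GRl q (x # xs) T. insg ?pq s z)
      = (\<Sum>w\<in>#GRl q xs T. \<Sum>z\<in>#insg q x w. insg ?pq s z)"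
    by (simp add: Ins_def sum_bind)
  also have "\<dots> = (\<Sum>w\<in>#GRl q xs T. (\<Sum>z\<in>#insg ?pq s w. insg q x z) + (\<Sum>x'\<in>#insg ?pq s x. insg q x' w))"
  proof -
    have "(\<Sum>z\<in>#insg q x w. insg ?pq s z) = (\<Sum>z\<in>#insg ?pq s w. insg q x z) + (\<Sum>x'\<in>#insg ?pq s x. insg q x' w)" for w
      by (rule E) (use assms(2) in \<open>simp add: pfree_def\<close>)
    then show ?thesis by simp
  qed
  also have "\<dots> = Ins q x (\<Sum>w\<in>#GRl q xs T. insg ?pq s w) + (\<Sum>x'\<in>#insg p s x. GRl q (x' # xs) T)"
    by (simp add: sum_mset.distrib Ins_def sum_bind xpq sum_mset.swap[of _ _ "insg p s x"])
  also have "\<dots> = GRl q (x # s # xs) T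
       + (\<Sum>i<length xs. \<Sum>c'\<in>#insg p s (xs ! i). GRl q (x # xs[i := c']) T)
       + (\<Sum>x'\<in>#insg p s x. GRl q (x' # xs) T)"
    unfolding Cons.IH[OF xsq] by (simp add: Ins_sum Ins_sum_mset)
  also have "GRl q (x # s # xs) T = GRl q (s # x # xs) T"
    using xq assms(2) by (simp add: Ins_comm)
  moreover have "(\<Sum>i<length (x # xs). \<Sum>c'\<in>#insg p s ((x # xs) ! i). GRl q ((x # xs)[i := c']) T)
     = (\<Sum>x'\<in>#insg p s x. GRl q (x' # xs) T) +
       (\<Sum>i<length xs. \<Sum>c'\<in>#insg p s (xs ! i). GRl q (x # xs[i := c']) T)"
    unfolding length_Cons sum.lessThan_Suc_shift by simp
  ultimately show ?case
    by (simp add: ac_simps)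
qed

lemma flags_GRl: "z \<in># GRl pr xs T \<Longrightarrow> flags z \<subseteq> (\<Union>x\<in>set xs. flags x) \<union> flags T"
proof (induction xs arbitrary: z)
  case Nil
  then show ?case by simp
next
  case (Cons x xs)
  then obtain w where w: "w \<in># GRl pr xs T" "z \<in># insg pr x w" by (auto simp: Ins_def)
  have "flags z \<subseteq> flags x \<union> flags w" using flags_insg w(2) .
  then show ?case using Cons.IH[OF w(1)] by auto
qed

lemma root_insg: "z \<in># insg pr s (G b N) \<Longrightarrow> \<exists>M. z = G b M"
  by (auto simp: insg_eq split: if_splits)

lemma root_GRl: "z \<in># GRl pr xs (G b N) \<Longrightarrow> \<exists>M. z = G b M"
proof (induction xs arbitrary: z)
  case Nil
  then show ?case by simp
next
  case (Cons x xs)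
  then obtain w where w: "w \<in># GRl pr xs (G b N)" "z \<in># insg pr x w" by (auto simp: Ins_def)
  then obtain M where "w = G b M" using Cons.IH by blast
  then show ?case using w(2) root_insg by metis
qed

primrec kids :: "'a gt \<Rightarrow> 'a gt multiset" where
  "kids (G b M) = M"

definition GRm :: "('a \<Rightarrow> bool) \<Rightarrow> 'a gt multiset \<Rightarrow> 'a gt \<Rightarrow> 'a gt multiset" where
  "GRm pr M T = GRl pr (SOME xs. mset xs = M) T"

lemma GRm_mset:
  assumes "\<forall>x\<in>set xs. pfree pr x"
  shows "GRm pr (mset xs) T = GRl pr xs T"
proof -
  have m: "mset (SOME ys. mset ys = mset xs) = mset xs" by (rule someI) simp
  then have "set (SOME ys. mset ys = mset xs) = set xs" by (metis set_mset_mset)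
  then show ?thesis unfolding GRm_def using GRl_perm[OF m] assms by simp
qed

lemma image_mset_sum: "image_mset h (sum F A) = (\<Sum>i\<in>A. image_mset h (F i))"
  by (induct A rule: infinite_finite_induct) auto

lemma insF_mset: "insF pr s (mset xs) =
  (\<Sum>i<length xs. image_mset (\<lambda>c'. mset (xs[i := c'])) (insg pr s (xs ! i)))"
proof (induction xs)
  case Nil
  then show ?case by simp
next
  case (Cons x xs)
  have "insF pr s (mset (x # xs)) = image_mset (\<lambda>c'. mset (c' # xs)) (insg pr s x)
      + image_mset (add_mset x) (insF pr s (mset xs))"
    by (simp add: insF_add)
  also have "image_mset (add_mset x) (insF pr s (mset xs)) =
     (\<Sum>i<length xs. image_mset (\<lambda>c'. mset (x # xs[i := c'])) (insg pr s (xs ! i)))"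
    unfolding Cons.IH by (simp add: image_mset_sum image_mset.compositionality o_def)
  finally show ?case
    unfolding length_Cons sum.lessThan_Suc_shift by simp
qed

lemma sum_mset_single_id: "(\<Sum>y\<in>#M. {#y#}) = M"
  by (induct M) auto

lemma sum_mset_sum: "sum_mset (image_mset h (sum F A)) = (\<Sum>i\<in>A. sum_mset (image_mset h (F i)))"
  by (induct A rule: infinite_finite_induct) auto

lemma assoc_flag:
  fixes as bs :: "nat gt list" and T :: "nat gt"
  assumes "\<forall>a\<in>set as. pfree (\<lambda>n. n = 1 \<or> n = 2) a"
    "\<forall>b\<in>set bs. pfree (\<lambda>n. n = 2) b" "pfree (\<lambda>n. n = 1) T"
  shows "(\<Sum>x\<in>#GRl (\<lambda>n. n = 1) as (G 1 (mset bs)). GRm (\<lambda>n. n = 2) (kids x) T)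
       = (\<Sum>y\<in>#GRl (\<lambda>n. n = 2) bs T. GRl (\<lambda>n. n = 1 \<or> n = 2) as y)"
  using assms(1)
proof (induction as)
  case Nil
  then show ?case using GRm_mset[of bs "\<lambda>n. n = 2" T] assms(2) by (simp add: sum_mset_single_id)
next
  case (Cons s as)
  let ?p = "\<lambda>n::nat. n = 1" and ?q = "\<lambda>n::nat. n = 2" and ?pq = "\<lambda>n::nat. n = 1 \<or> n = 2"
  have s1: "pfree ?p s" and s2: "pfree ?q s" using Cons.prems by (auto simp: pfree_def)
  have key: "(\<Sum>y\<in>#insg ?p s x. GRm ?q (kids y) T) = (\<Sum>z\<in>#GRm ?q (kids x) T. insg ?pq s z)"
    if x: "x \<in># GRl ?p as (G 1 (mset bs))" for x
  proof -
    obtain X where xX: "x = G 1 X" using root_GRl[OF x] by blast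
    define xs where "xs = (SOME xs. mset xs = X)"
    have mxs: "mset xs = X" unfolding xs_def by (rule someI_ex) (metis ex_mset)
    have fx: "flags x \<subseteq> (\<Union>a\<in>set as. flags a) \<union> flags (G 1 (mset bs))"
      using flags_GRl[OF x] .
    have xs2: "\<forall>c\<in>set xs. pfree ?q c"
    proof
      fix c assume c: "c \<in> set xs"
      then have "flags c \<subseteq> flags x" using xX mxs by auto
      with fx Cons.prems assms(2) show "pfree ?q c" unfolding pfree_def by fastforce
    qed
    have T1: "pfree ?p T" using assms(3) .
    have "(\<Sum>z\<in>#GRm ?q (kids x) T. insg ?pq s z) = (\<Sum>z\<in>#GRl ?q xs T. insg (\<lambda>a. ?p a \<or> ?q a) s z)"
      using GRm_mset[OF xs2] xX mxs by simp
    also have "\<dots> = GRl ?q (s # xs) T + (\<Sum>i<length xs. \<Sum>c'\<in>#insg ?p s (xs ! i). GRl ?q (xs[i := c']) T)"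
      by (rule D[OF xs2 s2 s1 T1])
    also have "GRl ?q (s # xs) T = GRm ?q (add_mset s X) T"
      using GRm_mset[of "s # xs" ?q T] xs2 s2 mxs by simp
    also have "(\<Sum>i<length xs. \<Sum>c'\<in>#insg ?p s (xs ! i). GRl ?q (xs[i := c']) T)
        = (\<Sum>i<length xs. \<Sum>c'\<in>#insg ?p s (xs ! i). GRm ?q (mset (xs[i := c'])) T)"
    proof (intro sum.cong refl arg_cong[where f=sum_mset] image_mset_cong)
      fix i c' assume i: "i \<in> {..<length xs}" and c': "c' \<in># insg ?p s (xs ! i)"
      have "pfree ?q c'" using pfree_insg[OF s2 _ c'] xs2 i by auto
      then have "\<forall>c\<in>set (xs[i := c']). pfree ?q c" using xs2 set_update_subset_insert[of xs i c'] by blast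
      then show "GRl ?q (xs[i := c']) T = GRm ?q (mset (xs[i := c'])) T" using GRm_mset by metis
    qed
    also have "\<dots> = (\<Sum>M\<in>#insF ?p s X. GRm ?q M T)"
      unfolding mxs[symmetric] insF_mset sum_mset_sum by (simp add: image_mset.compositionality o_def)
    finally have "(\<Sum>z\<in>#GRm ?q (kids x) T. insg ?pq s z) = GRm ?q (add_mset s X) T + (\<Sum>M\<in>#insF ?p s X. GRm ?q M T)" .
    moreover have "(\<Sum>y\<in>#insg ?p s x. GRm ?q (kids y) T) = GRm ?q (add_mset s X) T + (\<Sum>M\<in>#insF ?p s X. GRm ?q M T)"
      using xX by (simp add: insg_eq image_mset.compositionality o_def)
    ultimately show ?thesis by simp
  qed
  have "(\<Sum>x\<in>#GRl ?p (s # as) (G 1 (mset bs)). GRm ?q (kids x) T)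
      = (\<Sum>x\<in>#GRl ?p as (G 1 (mset bs)). \<Sum>y\<in>#insg ?p s x. GRm ?q (kids y) T)"
    by (simp add: Ins_def sum_bind)
  also have "\<dots> = (\<Sum>x\<in>#GRl ?p as (G 1 (mset bs)). \<Sum>z\<in>#GRm ?q (kids x) T. insg ?pq s z)"
    by (intro arg_cong[where f=sum_mset] image_mset_cong key)
  also have "\<dots> = Ins ?pq s (\<Sum>x\<in>#GRl ?p as (G 1 (mset bs)). GRm ?q (kids x) T)"
    by (simp add: Ins_def sum_bind)
  also have "\<dots> = Ins ?pq s (\<Sum>y\<in>#GRl ?q bs T. GRl ?pq as y)"
    using Cons by simp
  also have "\<dots> = (\<Sum>y\<in>#GRl ?q bs T. GRl ?pq (s # as) y)"
    by (simp add: Ins_sum_mset)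
  finally show ?case .
qed


primrec fg :: "ftree \<Rightarrow> bool gt" where
  "fg (FNode b N) = G b (image_mset fg N)"

primrec gf :: "bool gt \<Rightarrow> ftree" where
  "gf (G b N) = FNode b (image_mset gf N)"

lemma gf_fg[simp]: "gf (fg T) = T"
  by (induction T) (auto simp: image_mset.compositionality o_def intro: image_mset_cong[where g=id, simplified])

lemma image_gf_fg[simp]: "image_mset gf (image_mset fg M) = M"
  by (simp add: image_mset.compositionality o_def)

lemma ins_eq: "ins s (FNode b N) = (if b then {# FNode b (add_mset s N) #} else {#}) +
   (\<Sum>c\<in>#N. image_mset (\<lambda>c'. FNode b (add_mset c' (N - {#c#}))) (ins s c))"
proof -
  have "(\<Sum>c\<in>#N. if c \<in># N then image_mset (\<lambda>c'. FNode b (add_mset c' (N - {#c#}))) (ins s c) else {#})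
      = (\<Sum>c\<in>#N. image_mset (\<lambda>c'. FNode b (add_mset c' (N - {#c#}))) (ins s c))"
    by (intro arg_cong[where f=sum_mset] image_mset_cong) simp
  then show ?thesis by (simp only: ins.simps)
qed

lemma insF_image: "insF pr s (image_mset f N) =
  (\<Sum>c\<in>#N. image_mset (\<lambda>c'. add_mset c' (image_mset f N - {#f c#})) (insg pr s (f c)))"
  unfolding insF_def by (simp add: image_mset.compositionality o_def)

lemma fg_ins: "image_mset fg (ins s T) = insg (\<lambda>b. b) (fg s) (fg T)"
proof (induction T)
  case (FNode b N)
  have "image_mset fg (ins s (FNode b N)) = (if b then {#G b (add_mset (fg s) (image_mset fg N))#} else {#})
    + (\<Sum>c\<in>#N. image_mset (\<lambda>c'. G b (add_mset c' (image_mset fg (N - {#c#})))) (image_mset fg (ins s c)))"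
    unfolding ins_eq by (simp add: image_sum_mset image_mset.compositionality o_def)
  also have "(\<Sum>c\<in>#N. image_mset (\<lambda>c'. G b (add_mset c' (image_mset fg (N - {#c#})))) (image_mset fg (ins s c)))
     = (\<Sum>c\<in>#N. image_mset (\<lambda>c'. G b (add_mset c' (image_mset fg N - {#fg c#}))) (insg (\<lambda>b. b) (fg s) (fg c)))"
  proof (intro arg_cong[where f=sum_mset] image_mset_cong)
    fix c assume c: "c \<in># N"
    have "image_mset fg (N - {#c#}) = image_mset fg N - {#fg c#}"
      using c by (simp add: image_mset_Diff)
    then show "image_mset (\<lambda>c'. G b (add_mset c' (image_mset fg (N - {#c#})))) (image_mset fg (ins s c))
      = image_mset (\<lambda>c'. G b (add_mset c' (image_mset fg N - {#fg c#}))) (insg (\<lambda>b. b) (fg s) (fg c))"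
      using FNode.IH[OF c] by simp
  qed
  finally show ?case
    by (simp add: insg_eq insF_image image_sum_mset image_mset.compositionality o_def)
qed

definition f0 :: "rtree \<Rightarrow> ftree multiset \<Rightarrow> ftree multiset" where
  "f0 s R = sum_mset (image_mset (ins (mark False s)) R)"

primrec mk :: "'a \<Rightarrow> rtree \<Rightarrow> 'a gt" where
  "mk a (Node N) = G a (image_mset (mk a) N)"

primrec ung :: "'a gt \<Rightarrow> rtree" where
  "ung (G b N) = Node (image_mset ung N)"

lemma fg_mark[simp]: "fg (mark b t) = mk b t"
  by (induction t) (auto simp: image_mset.compositionality o_def intro!: image_mset_cong)

lemma unmark_ung: "unmark T = ung (fg T)"
  by (induction T) (auto simp: image_mset.compositionality o_def intro!: image_mset_cong)

lemma ung_mk[simp]: "ung (mk a t) = t"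
  by (induction t) (auto simp: image_mset.compositionality o_def intro: image_mset_cong[where g=id, simplified])

lemma flags_mk[simp]: "flags (mk a t) = {a}"
  by (induction t) auto

lemma image_fg_f0: "image_mset fg (f0 s R) = Ins (\<lambda>b. b) (mk False s) (image_mset fg R)"
  unfolding f0_def Ins_def by (simp add: image_sum_mset fg_ins image_mset.compositionality o_def)

lemma f0_comm: "comp_fun_commute f0"
proof
  fix x y
  show "f0 y \<circ> f0 x = f0 x \<circ> f0 y"
  proof
    fix R
    have "image_mset fg (f0 y (f0 x R)) = image_mset fg (f0 x (f0 y R))"
      unfolding image_fg_f0 by (rule Ins_comm) (auto simp: pfree_def)
    then have "image_mset gf (image_mset fg (f0 y (f0 x R))) = image_mset gf (image_mset fg (f0 x (f0 y R)))"
      by simp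
    then show "(f0 y \<circ> f0 x) R = (f0 x \<circ> f0 y) R" by simp
  qed
qed

lemma fold_f0: "fold_mset f0 z (mset cs) = foldr f0 cs z"
proof -
  interpret comp_fun_commute f0 by (rule f0_comm)
  show ?thesis by (induction cs) auto
qed

lemma gl_trees_f0: "gl_trees (Node C) t' = image_mset unmark (fold_mset f0 {#mark True t'#} C)"
  unfolding gl_trees_def f0_def by simp

lemma GL_GR: "gl_trees (Node (mset cs)) t' = image_mset ung (GRl (\<lambda>b. b) (map (mk False) cs) (mk True t'))"
proof -
  have "image_mset fg (foldr f0 cs {#mark True t'#}) = GRl (\<lambda>b. b) (map (mk False) cs) (mk True t')"
    by (induction cs) (simp_all add: image_fg_f0)
  then show ?thesis unfolding gl_trees_f0 fold_f0
    by (metis (no_types, lifting) image_mset.comp unmark_ung comp_def image_mset_cong)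
qed

lemma insg_map: "image_mset (map_gt f) (insg (qr \<circ> f) s T) = insg qr (map_gt f s) (map_gt f T)"
proof (induction T)
  case (G b N)
  have IF: "image_mset (image_mset (map_gt f)) (insF (qr \<circ> f) s N) = insF qr (map_gt f s) (image_mset (map_gt f) N)"
  proof -
    have "image_mset (image_mset (map_gt f)) (insF (qr \<circ> f) s N)
      = (\<Sum>c\<in>#N. image_mset (\<lambda>c'. add_mset c' (image_mset (map_gt f) (N - {#c#}))) (image_mset (map_gt f) (insg (qr \<circ> f) s c)))"
      unfolding insF_def by (simp add: image_sum_mset image_mset.compositionality o_def)
    also have "\<dots> = (\<Sum>c\<in>#N. image_mset (\<lambda>c'. add_mset c' (image_mset (map_gt f) N - {#map_gt f c#})) (insg qr (map_gt f s) (map_gt f c)))"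
    proof (intro arg_cong[where f=sum_mset] image_mset_cong)
      fix c assume c: "c \<in># N"
      have "image_mset (map_gt f) (N - {#c#}) = image_mset (map_gt f) N - {#map_gt f c#}"
        using c by (simp add: image_mset_Diff)
      then show "image_mset (\<lambda>c'. add_mset c' (image_mset (map_gt f) (N - {#c#}))) (image_mset (map_gt f) (insg (qr \<circ> f) s c))
        = image_mset (\<lambda>c'. add_mset c' (image_mset (map_gt f) N - {#map_gt f c#})) (insg qr (map_gt f s) (map_gt f c))"
        using G.IH[OF c] unfolding comp_def by simp
    qed
    finally show ?thesis by (simp add: insF_image)
  qed
  show ?case
    by (simp add: insg_eq IF[symmetric] image_mset.compositionality o_def)
qed

lemma GRl_map: "image_mset (map_gt f) (GRl (qr \<circ> f) xs T) = GRl qr (map (map_gt f) xs) (map_gt f T)"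
proof (induction xs)
  case Nil
  then show ?case by simp
next
  case (Cons x xs)
  then show ?case
    by (simp add: Ins_def image_sum_mset image_mset.compositionality o_def insg_map[symmetric]
          flip: Cons.IH)
qed

lemma ung_map[simp]: "ung (map_gt f T) = ung T"
  by (induction T) (auto simp: image_mset.compositionality o_def intro!: image_mset_cong)

lemma map_gt_const: "\<forall>a\<in>flags T. f a = v \<Longrightarrow> map_gt f T = mk v (ung T)"
  by (induction T) (auto simp: image_mset.compositionality o_def intro!: image_mset_cong)

lemma GL_gen:
  assumes "\<forall>c\<in>set xs. \<forall>a\<in>flags c. \<not> pr a" "\<forall>a\<in>flags T. pr a"
  shows "gl_trees (Node (mset (map ung xs))) (ung T) = image_mset ung (GRl pr xs T)"
proof -
  have "image_mset ung (GRl pr xs T) = image_mset ung (image_mset (map_gt pr) (GRl ((\<lambda>b. b) \<circ> pr) xs T))"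
    by (simp add: image_mset.compositionality o_def)
  also have "\<dots> = image_mset ung (GRl (\<lambda>b. b) (map (map_gt pr) xs) (map_gt pr T))"
    by (simp only: GRl_map)
  also have "map (map_gt pr) xs = map (mk False) (map ung xs)"
    using assms(1) by (auto simp: map_gt_const)
  also have "map_gt pr T = mk True (ung T)"
    using assms(2) by (simp add: map_gt_const)
  finally have 1: "image_mset ung (GRl pr xs T) = image_mset ung (GRl (\<lambda>b. b) (map (mk False) (map ung xs)) (mk True (ung T)))" .
  show ?thesis unfolding 1 by (rule GL_GR)
qed

lemma map_ung_mk[simp]: "map ung (map (mk a) xs) = xs"
  by (induct xs) auto

lemma gl_assoc_trees: "(\<Sum>m\<in>#gl_trees a b. gl_trees m c) = (\<Sum>m\<in>#gl_trees b c. gl_trees a m)"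
proof -
  obtain A where a: "a = Node A" by (cases a)
  obtain as where as: "A = mset as" by (metis ex_mset)
  obtain B where b: "b = Node B" by (cases b)
  obtain bs where bs: "B = mset bs" by (metis ex_mset)
  define as' where "as' = map (mk (0::nat)) as"
  define bs' where "bs' = map (mk (1::nat)) bs"
  define T where "T = mk (2::nat) c"
  let ?p = "\<lambda>n::nat. n = 1" and ?q = "\<lambda>n::nat. n = 2" and ?pq = "\<lambda>n::nat. n = 1 \<or> n = 2"
  have mb: "mk 1 b = G 1 (mset bs')" unfolding b bs bs'_def by simp
  have "gl_trees (Node (mset (map ung as'))) (ung (mk (1::nat) b)) = image_mset ung (GRl ?p as' (mk 1 b))"
    by (rule GL_gen) (auto simp: as'_def)
  then have "gl_trees a b = image_mset ung (GRl ?p as' (mk 1 b))"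
    unfolding ung_mk by (simp only: as'_def map_ung_mk a as)
  then have ab: "gl_trees a b = image_mset ung (GRl ?p as' (G 1 (mset bs')))"
    by (simp only: mb)
  have "gl_trees (Node (mset (map ung bs'))) (ung T) = image_mset ung (GRl ?q bs' T)"
    by (rule GL_gen) (auto simp: bs'_def T_def)
  then have bc: "gl_trees b c = image_mset ung (GRl ?q bs' T)"
    by (simp only: bs'_def T_def map_ung_mk ung_mk b bs)
  have L: "gl_trees (ung x) c = image_mset ung (GRm ?q (kids x) T)"
    if x: "x \<in># GRl ?p as' (G 1 (mset bs'))" for x
  proof -
    obtain X where xX: "x = G 1 X" using root_GRl[OF x] by blast
    obtain xs where mxs: "X = mset xs" by (metis ex_mset)
    have fx: "flags x \<subseteq> (\<Union>a\<in>set as'. flags a) \<union> flags (G 1 (mset bs'))"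
      using flags_GRl[OF x] .
    have fl: "\<forall>c\<in>set xs. \<forall>a\<in>flags c. \<not> ?q a"
    proof (intro ballI)
      fix c a assume c: "c \<in> set xs" and a: "a \<in> flags c"
      then have "a \<in> flags x" using xX mxs by auto
      with fx show "\<not> ?q a" by (auto simp: as'_def bs'_def split: if_splits)
    qed
    have "ung x = Node (mset (map ung xs))" using xX mxs by simp
    then have "gl_trees (ung x) c = image_mset ung (GRl ?q xs T)"
      using GL_gen[OF fl, of T] by (simp add: T_def)
    also have "GRl ?q xs T = GRm ?q (kids x) T"
      using GRm_mset[of xs ?q T] fl xX mxs by (simp add: pfree_def)
    finally show ?thesis .
  qed
  have R: "gl_trees a (ung y) = image_mset ung (GRl ?pq as' y)"
    if y: "y \<in># GRl ?q bs' T" for y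
  proof -
    have "flags y \<subseteq> (\<Union>a\<in>set bs'. flags a) \<union> flags T" using flags_GRl[OF y] .
    then have fy: "\<forall>a\<in>flags y. ?pq a" by (auto simp: bs'_def T_def split: if_splits)
    have "gl_trees (Node (mset (map ung as'))) (ung y) = image_mset ung (GRl ?pq as' y)"
      by (rule GL_gen[OF _ fy]) (auto simp: as'_def)
    then show ?thesis by (simp only: as'_def map_ung_mk a as)
  qed
  have "(\<Sum>m\<in>#gl_trees a b. gl_trees m c) = (\<Sum>x\<in>#GRl ?p as' (G 1 (mset bs')). gl_trees (ung x) c)"
    unfolding ab by (simp add: image_mset.compositionality o_def)
  also have "\<dots> = (\<Sum>x\<in>#GRl ?p as' (G 1 (mset bs')). image_mset ung (GRm ?q (kids x) T))"
    by (intro arg_cong[where f=sum_mset] image_mset_cong L)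
  also have "\<dots> = image_mset ung (\<Sum>x\<in>#GRl ?p as' (G 1 (mset bs')). GRm ?q (kids x) T)"
    by (simp add: image_sum_mset image_mset.compositionality o_def)
  also have "(\<Sum>x\<in>#GRl ?p as' (G 1 (mset bs')). GRm ?q (kids x) T) = (\<Sum>y\<in>#GRl ?q bs' T. GRl ?pq as' y)"
    by (rule assoc_flag) (auto simp: as'_def bs'_def T_def pfree_def)
  also have "image_mset ung \<dots> = (\<Sum>y\<in>#GRl ?q bs' T. image_mset ung (GRl ?pq as' y))"
    by (simp add: image_sum_mset image_mset.compositionality o_def)
  also have "\<dots> = (\<Sum>y\<in>#GRl ?q bs' T. gl_trees a (ung y))"
    by (intro arg_cong[where f=sum_mset] image_mset_cong R[symmetric])
  also have "\<dots> = (\<Sum>m\<in>#gl_trees b c. gl_trees a m)"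
    unfolding bc by (simp add: image_mset.compositionality o_def)
  finally show ?thesis .
qed


lemma count_image_inj: "inj f \<Longrightarrow> count (image_mset f M) (f x) = count M x"
  by (induction M) (auto simp: inj_eq)

lemma unmark_mark[simp]: "unmark (mark b t) = t"
  by (simp add: unmark_ung)

lemma gl_trees_bullet_left: "gl_trees bullet t' = {#t'#}"
  unfolding gl_trees_def by simp

lemma GR_leaf:
  assumes "\<forall>x\<in>set xs. pfree pr x" "pr b" "\<forall>c\<in>#N. pfree pr c"
  shows "GRl pr xs (G b N) = {#G b (N + mset xs)#}"
  using assms(1)
proof (induction xs)
  case Nil
  then show ?case by simp
next
  case (Cons x xs)
  have "insF pr x (N + mset xs) = {#}"
    unfolding insF_def
  proof (intro sum_mset.neutral ballI)
    fix M assume "M \<in># image_mset (\<lambda>c. image_mset (\<lambda>c'. add_mset c' (N + mset xs - {#c#})) (insg pr x c)) (N + mset xs)"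
    then obtain c where c: "c \<in># N + mset xs" and M: "M = image_mset (\<lambda>c'. add_mset c' (N + mset xs - {#c#})) (insg pr x c)"
      by auto
    have "pfree pr c" using c Cons.prems assms(3) by auto
    then show "M = {#}" unfolding M using insg_noflag by (auto simp: pfree_def)
  qed
  then show ?case using Cons assms(2) by (simp add: insg_eq)
qed

lemma gl_trees_bullet_right: "gl_trees t bullet = {#t#}"
proof -
  obtain C where t: "t = Node C" by (cases t)
  obtain cs where C: "C = mset cs" by (metis ex_mset)
  have "GRl (\<lambda>b. b) (map (mk False) cs) (G True {#}) = {#G True (mset (map (mk False) cs))#}"
    by (subst GR_leaf) (auto simp: pfree_def)
  then show ?thesis unfolding t C GL_GR
    by (simp add: image_mset.compositionality o_def)
qed

lemma size_rep: "c \<in># M \<Longrightarrow> size (add_mset c' (M - {#c#})) = size M"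
  by (metis insert_DiffM size_add_mset)

lemma size_GRl: "z \<in># GRl pr xs (G b N) \<Longrightarrow> \<exists>M. z = G b M \<and> size N \<le> size M"
proof (induction xs arbitrary: z)
  case Nil
  then show ?case by simp
next
  case (Cons x xs)
  then obtain w where w: "w \<in># GRl pr xs (G b N)" "z \<in># insg pr x w" by (auto simp: Ins_def)
  then obtain M where M: "w = G b M" "size N \<le> size M" using Cons.IH by blast
  show ?case
  proof (cases "z \<in># image_mset (G b) (insF pr x M)")
    case True
    then obtain M' where M': "M' \<in># insF pr x M" "z = G b M'" by auto
    then obtain c c' where cc: "c \<in># M" "M' = add_mset c' (M - {#c#})" using in_insF by blast
    have "size M' = size M" using cc size_rep by simp
    then show ?thesis using M' M by auto
  next
    case False
    then have "z = G b (add_mset x M)" using w(2) M by (auto simp: insg_eq split: if_splits)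
    then show ?thesis using M by auto
  qed
qed

lemma filter_sum_mset: "filter_mset Pr (sum_mset M) = sum_mset (image_mset (filter_mset Pr) M)"
  by (induction M) auto

lemma sum_filter_if: "sum_mset (image_mset f (filter_mset Pr M)) = (\<Sum>w\<in>#M. if Pr w then f w else {#})"
  by (induction M) auto

lemma filter_one:
  "filter_mset (\<lambda>z. size (kids z) = 1) (GRl pr xs (G b {#S#})) = image_mset (\<lambda>z. G b {#z#}) (GRl pr xs S)"
proof (induction xs)
  case Nil
  then show ?case by simp
next
  case (Cons x xs)
  let ?P = "\<lambda>z. size (kids z) = 1"
  have step: "filter_mset ?P (insg pr x w) = (if ?P w then image_mset (G b) (insF pr x (kids w)) else {#})"
    if w: "w \<in># GRl pr xs (G b {#S#})" for w
  proof -
    obtain M where M: "w = G b M" "1 \<le> size M" using size_GRl[OF w] by auto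
    have sz: "\<And>M'. M' \<in># insF pr x M \<Longrightarrow> size M' = size M"
    proof -
      fix M' assume "M' \<in># insF pr x M"
      then obtain c c' where cc: "c \<in># M" "M' = add_mset c' (M - {#c#})" using in_insF by blast
      then show "size M' = size M" using size_rep by simp
    qed
    have "filter_mset ?P (image_mset (G b) (insF pr x M)) = (if size M = 1 then image_mset (G b) (insF pr x M) else {#})"
    proof -
      have "filter_mset ?P (image_mset (G b) (insF pr x M)) = filter_mset (\<lambda>_. size M = 1) (image_mset (G b) (insF pr x M))"
        by (rule filter_mset_cong0) (use sz in auto)
      then show ?thesis by (cases "size M = 1") auto
    qed
    moreover have "M \<noteq> {#}" using M(2) by auto
    then have "\<not> ?P (G b (add_mset x M))" by simp
    ultimately show ?thesis using M by (auto simp: insg_eq)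
  qed
  have "filter_mset ?P (GRl pr (x # xs) (G b {#S#})) = (\<Sum>w\<in>#GRl pr xs (G b {#S#}). filter_mset ?P (insg pr x w))"
    by (simp add: Ins_def filter_sum_mset image_mset.compositionality o_def)
  also have "\<dots> = (\<Sum>w\<in>#GRl pr xs (G b {#S#}). if ?P w then image_mset (G b) (insF pr x (kids w)) else {#})"
    by (intro arg_cong[where f=sum_mset] image_mset_cong step)
  also have "\<dots> = (\<Sum>w\<in>#filter_mset ?P (GRl pr xs (G b {#S#})). image_mset (G b) (insF pr x (kids w)))"
    by (rule sum_filter_if[symmetric])
  also have "\<dots> = (\<Sum>z\<in>#GRl pr xs S. image_mset (\<lambda>z. G b {#z#}) (insg pr x z))"
    unfolding Cons.IH by (simp add: image_mset.compositionality o_def insF_add)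
  also have "\<dots> = image_mset (\<lambda>z. G b {#z#}) (GRl pr (x # xs) S)"
    by (simp add: Ins_def image_sum_mset image_mset.compositionality o_def)
  finally show ?case .
qed

lemma count_ung_one: "count (image_mset ung R) (Node {#r#}) =
  count (image_mset ung (filter_mset (\<lambda>z. size (kids z) = 1) R)) (Node {#r#})"
proof -
  let ?P = "\<lambda>z. size (kids z) = 1"
  have "count (image_mset ung (filter_mset (\<lambda>z. \<not> ?P z) R)) (Node {#r#}) = 0"
  proof -
    have "Node {#r#} \<notin># image_mset ung (filter_mset (\<lambda>z. \<not> ?P z) R)"
    proof
      assume "Node {#r#} \<in># image_mset ung (filter_mset (\<lambda>z. \<not> ?P z) R)"
      then have "Node {#r#} \<in> ung ` set_mset (filter_mset (\<lambda>z. \<not> ?P z) R)" by (simp only: set_image_mset)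
      then obtain z where z0: "z \<in> set_mset (filter_mset (\<lambda>z. \<not> ?P z) R)" "Node {#r#} = ung z"
        by (rule imageE)
      then have z: "\<not> ?P z" "ung z = Node {#r#}" by auto
      obtain b M where "z = G b M" by (cases z)
      then show False using z by (auto dest: arg_cong[where f=size])
    qed
    then show ?thesis by (simp add: count_eq_zero_iff)
  qed
  moreover have "image_mset ung R = image_mset ung (filter_mset ?P R) + image_mset ung (filter_mset (\<lambda>z. \<not> ?P z) R)"
    by (metis image_mset_union multiset_partition)
  ultimately show ?thesis by simp
qed

lemma T_one: "count (gl_trees t (Node {#s#})) (Node {#r#}) = count (gl_trees t s) r"
proof -
  obtain C where t: "t = Node C" by (cases t)
  obtain cs where C: "C = mset cs" by (metis ex_mset)
  let ?xs = "map (mk False) cs"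
  have "count (gl_trees t (Node {#s#})) (Node {#r#}) =
     count (image_mset ung (GRl (\<lambda>b. b) ?xs (G True {#mk True s#}))) (Node {#r#})"
    unfolding t C GL_GR by simp
  also have "\<dots> = count (image_mset ung (image_mset (\<lambda>z. G True {#z#}) (GRl (\<lambda>b. b) ?xs (mk True s)))) (Node {#r#})"
    by (subst count_ung_one) (simp only: filter_one)
  also have "\<dots> = count (image_mset (\<lambda>u. Node {#u#}) (image_mset ung (GRl (\<lambda>b. b) ?xs (mk True s)))) (Node {#r#})"
    by (simp add: image_mset.compositionality o_def)
  also have "\<dots> = count (image_mset ung (GRl (\<lambda>b. b) ?xs (mk True s))) r"
    by (rule count_image_inj) (simp add: inj_def)
  also have "\<dots> = count (gl_trees t s) r"
    unfolding t C GL_GR ..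
  finally show ?thesis .
qed

lemma T_big:
  assumes "2 \<le> size N"
  shows "count (gl_trees t (Node N)) (Node {#r#}) = 0"
proof -
  obtain C where t: "t = Node C" by (cases t)
  obtain cs where C: "C = mset cs" by (metis ex_mset)
  have "Node {#r#} \<notin># image_mset ung (GRl (\<lambda>b. b) (map (mk False) cs) (G True (image_mset (mk True) N)))"
  proof
    assume "Node {#r#} \<in># image_mset ung (GRl (\<lambda>b. b) (map (mk False) cs) (G True (image_mset (mk True) N)))"
    then obtain z where z: "z \<in># GRl (\<lambda>b. b) (map (mk False) cs) (G True (image_mset (mk True) N))" "ung z = Node {#r#}"
      by auto
    obtain M where "z = G True M" "size (image_mset (mk True) N) \<le> size M" using size_GRl[OF z(1)] by auto
    then show False using z(2) assms by (auto dest: arg_cong[where f=size])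
  qed
  then show ?thesis unfolding t C GL_GR by (simp add: count_eq_zero_iff)
qed

lemma T_bul: "count (gl_trees t t') bullet = (if t = bullet \<and> t' = bullet then 1 else 0)"
proof (cases "t' = bullet")
  case True
  then show ?thesis by (auto simp: gl_trees_bullet_right)
next
  case False
  obtain N where t': "t' = Node N" by (cases t')
  with False have N: "N \<noteq> {#}" by auto
  obtain C where t: "t = Node C" by (cases t)
  obtain cs where C: "C = mset cs" by (metis ex_mset)
  have "bullet \<notin># image_mset ung (GRl (\<lambda>b. b) (map (mk False) cs) (G True (image_mset (mk True) N)))"
  proof
    assume "bullet \<in># image_mset ung (GRl (\<lambda>b. b) (map (mk False) cs) (G True (image_mset (mk True) N)))"
    then obtain z where z: "z \<in># GRl (\<lambda>b. b) (map (mk False) cs) (G True (image_mset (mk True) N))" "ung z = bullet"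
      by auto
    obtain M where "z = G True M" "size (image_mset (mk True) N) \<le> size M" using size_GRl[OF z(1)] by auto
    then show False using z(2) N by auto
  qed
  then show ?thesis using False unfolding t' t C GL_GR by (simp add: count_eq_zero_iff)
qed


definition autS :: "nat list set \<Rightarrow> (nat list \<Rightarrow> nat list) set" where
  "autS V = {f. bij_betw f V V \<and> (\<forall>a. a \<notin> V \<longrightarrow> f a = a)
              \<and> (\<forall>v\<in>V. \<forall>w\<in>V. prefix w v \<longleftrightarrow> prefix (f w) (f v))}"

lemma paut_autS: "paut p = autS (pverts p)"
  unfolding paut_def autS_def vle_def by simp

definition isoS :: "nat list set \<Rightarrow> nat list set \<Rightarrow> (nat list \<Rightarrow> nat list) \<Rightarrow> (nat list \<Rightarrow> nat list) \<Rightarrow> bool" where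
  "isoS V W \<phi> \<psi> \<longleftrightarrow> (\<forall>v\<in>V. \<phi> v \<in> W \<and> \<psi> (\<phi> v) = v) \<and> (\<forall>w\<in>W. \<psi> w \<in> V \<and> \<phi> (\<psi> w) = w)
     \<and> (\<forall>v\<in>V. \<forall>w\<in>V. prefix w v \<longleftrightarrow> prefix (\<phi> w) (\<phi> v))"

lemma isoS_sym: "isoS V W \<phi> \<psi> \<Longrightarrow> isoS W V \<psi> \<phi>"
  unfolding isoS_def by metis

lemma conj_aut:
  assumes iso: "isoS V W \<phi> \<psi>" and f: "f \<in> autS V"
  shows "(\<lambda>a. if a \<in> W then \<phi> (f (\<psi> a)) else a) \<in> autS W"
proof -
  let ?h = "\<lambda>a. if a \<in> W then \<phi> (f (\<psi> a)) else a"
  have bpsi: "bij_betw \<psi> W V" by (rule bij_betw_byWitness[where f'=\<phi>]) (use iso in \<open>auto simp: isoS_def\<close>)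
  have bphi: "bij_betw \<phi> V W" by (rule bij_betw_byWitness[where f'=\<psi>]) (use iso in \<open>auto simp: isoS_def\<close>)
  have bf: "bij_betw f V V" using f by (simp add: autS_def)
  have "bij_betw ((\<phi> \<circ> f) \<circ> \<psi>) W W" using bij_betw_trans[OF bpsi bij_betw_trans[OF bf bphi]] .
  then have b: "bij_betw ?h W W" by (rule bij_betw_cong[THEN iffD1, rotated]) auto
  have fV: "\<And>v. v \<in> V \<Longrightarrow> f v \<in> V" using bf by (meson bij_betwE)
  have ord: "prefix w v \<longleftrightarrow> prefix (?h w) (?h v)" if "v \<in> W" "w \<in> W" for v w
  proof -
    have pv: "\<psi> v \<in> V" "\<psi> w \<in> V" using that iso by (auto simp: isoS_def)
    have "prefix w v \<longleftrightarrow> prefix (\<psi> w) (\<psi> v)"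
      using iso pv that unfolding isoS_def by metis
    also have "\<dots> \<longleftrightarrow> prefix (f (\<psi> w)) (f (\<psi> v))" using f pv by (simp add: autS_def)
    also have "\<dots> \<longleftrightarrow> prefix (\<phi> (f (\<psi> w))) (\<phi> (f (\<psi> v)))"
      using iso fV[OF pv(1)] fV[OF pv(2)] unfolding isoS_def by metis
    finally show ?thesis using that by simp
  qed
  show ?thesis unfolding autS_def using b ord by auto
qed

lemma conj_inv:
  assumes iso: "isoS V W \<phi> \<psi>" and f: "f \<in> autS V"
  shows "(\<lambda>a. if a \<in> V then \<psi> ((\<lambda>a. if a \<in> W then \<phi> (f (\<psi> a)) else a) (\<phi> a)) else a) = f"
proof
  fix a
  show "(if a \<in> V then \<psi> ((\<lambda>a. if a \<in> W then \<phi> (f (\<psi> a)) else a) (\<phi> a)) else a) = f a"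
  proof (cases "a \<in> V")
    case True
    have "f a \<in> V" using f True by (auto simp: autS_def dest: bij_betwE)
    then show ?thesis using True iso by (auto simp: isoS_def)
  next
    case False
    then show ?thesis using f by (auto simp: autS_def)
  qed
qed

lemma iso_card:
  assumes iso: "isoS V W \<phi> \<psi>"
  shows "card (autS V) = card (autS W)"
proof -
  let ?F = "\<lambda>f a. if a \<in> W then \<phi> (f (\<psi> a)) else a"
  let ?G = "\<lambda>g a. if a \<in> V then \<psi> (g (\<phi> a)) else a"
  have iso2: "isoS W V \<psi> \<phi>" using iso by (rule isoS_sym)
  have "bij_betw ?F (autS V) (autS W)"
  proof (rule bij_betw_byWitness[where f'="?G"])
    show "\<forall>a\<in>autS V. ?G (?F a) = a" using conj_inv[OF iso] by blast
    show "\<forall>a\<in>autS W. ?F (?G a) = a" using conj_inv[OF iso2] by blast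
    show "?F ` autS V \<subseteq> autS W" using conj_aut[OF iso] by blast
    show "?G ` autS W \<subseteq> autS V" using conj_aut[OF iso2] by blast
  qed
  then show ?thesis by (rule bij_betw_same_card)
qed

lemma pverts_P: "a \<in> pverts (P xs) \<longleftrightarrow> a = [] \<or> (\<exists>i b. a = i # b \<and> i < length xs \<and> b \<in> pverts (xs ! i))"
  unfolding pverts_def by (cases a) auto

lemma iso_exists: "forget p = forget q \<Longrightarrow> \<exists>\<phi> \<psi>. isoS (pverts p) (pverts q) \<phi> \<psi>"
proof (induction p arbitrary: q)
  case (P xs)
  obtain ys where q: "q = P ys" by (cases q)
  have m: "mset (map forget xs) = mset (map forget ys)" using P.prems q by simp
  then have len: "length ys = length xs" by (metis length_map mset_eq_length)
  obtain \<sigma> where \<sigma>0: "bij_betw \<sigma> {..<length (map forget xs)} {..<length (map forget ys)}"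
    "\<forall>i<length (map forget xs). map forget xs ! i = map forget ys ! \<sigma> i"
    using permutation_Ex_bij[OF m] by blast
  have \<sigma>: "bij_betw \<sigma> {..<length xs} {..<length ys}"
    "\<forall>i<length xs. forget (xs ! i) = forget (ys ! \<sigma> i)"
  proof -
    show "bij_betw \<sigma> {..<length xs} {..<length ys}" using \<sigma>0(1) by simp
    then have "\<And>i. i < length xs \<Longrightarrow> \<sigma> i < length ys" by (auto dest: bij_betwE)
    then show "\<forall>i<length xs. forget (xs ! i) = forget (ys ! \<sigma> i)" using \<sigma>0(2) by simp
  qed
  have "\<forall>i<length xs. \<exists>\<phi> \<psi>. isoS (pverts (xs ! i)) (pverts (ys ! \<sigma> i)) \<phi> \<psi>"
    using P.IH \<sigma>(2) by (meson nth_mem)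
  then obtain F H where FH: "\<forall>i<length xs. isoS (pverts (xs ! i)) (pverts (ys ! \<sigma> i)) (F i) (H i)"
    by metis
  define \<sigma>' where "\<sigma>' = inv_into {..<length xs} \<sigma>"
  have s1: "\<And>i. i < length xs \<Longrightarrow> \<sigma> i < length ys \<and> \<sigma>' (\<sigma> i) = i"
    using \<sigma>(1) unfolding \<sigma>'_def by (auto simp: bij_betw_def inv_into_f_f)
  have s2: "\<And>j. j < length ys \<Longrightarrow> \<sigma>' j < length xs \<and> \<sigma> (\<sigma>' j) = j"
    using \<sigma>(1) unfolding \<sigma>'_def bij_betw_def
    by (metis inv_into_into f_inv_into_f lessThan_iff)
  define \<phi> where "\<phi> a = (case a of [] \<Rightarrow> [] | i # b \<Rightarrow> \<sigma> i # F i b)" for a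
  define \<psi> where "\<psi> a = (case a of [] \<Rightarrow> [] | j # b \<Rightarrow> \<sigma>' j # H (\<sigma>' j) b)" for a
  have A: "\<phi> v \<in> pverts (P ys) \<and> \<psi> (\<phi> v) = v" if v: "v \<in> pverts (P xs)" for v
  proof (cases v)
    case Nil
    then show ?thesis by (simp add: \<phi>_def \<psi>_def pverts_P)
  next
    case (Cons i b)
    then have ib: "i < length xs" "b \<in> pverts (xs ! i)" using v by (auto simp: pverts_P)
    have iso: "isoS (pverts (xs ! i)) (pverts (ys ! \<sigma> i)) (F i) (H i)" using FH ib by auto
    have 1: "F i b \<in> pverts (ys ! \<sigma> i)" "H i (F i b) = b" using iso ib(2) unfolding isoS_def by auto
    have 2: "\<phi> v = \<sigma> i # F i b" using Cons by (simp add: \<phi>_def)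
    have 3: "\<psi> (\<phi> v) = v" unfolding 2 using Cons 1 s1[OF ib(1)] by (simp add: \<psi>_def)
    have "\<phi> v \<in> pverts (P ys)" unfolding 2 pverts_P using 1 s1[OF ib(1)] by blast
    then show ?thesis using 3 by simp
  qed
  have B: "\<psi> w \<in> pverts (P xs) \<and> \<phi> (\<psi> w) = w" if w: "w \<in> pverts (P ys)" for w
  proof (cases w)
    case Nil
    then show ?thesis by (simp add: \<phi>_def \<psi>_def pverts_P)
  next
    case (Cons j b)
    then have jb: "j < length ys" "b \<in> pverts (ys ! j)" using w by (auto simp: pverts_P)
    have iso: "isoS (pverts (xs ! \<sigma>' j)) (pverts (ys ! j)) (F (\<sigma>' j)) (H (\<sigma>' j))"
      using FH s2[OF jb(1)] by metis
    have 1: "H (\<sigma>' j) b \<in> pverts (xs ! \<sigma>' j)" "F (\<sigma>' j) (H (\<sigma>' j) b) = b" using iso jb(2) unfolding isoS_def by auto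
    have 2: "\<psi> w = \<sigma>' j # H (\<sigma>' j) b" using Cons by (simp add: \<psi>_def)
    have 3: "\<phi> (\<psi> w) = w" unfolding 2 using Cons 1 s2[OF jb(1)] by (simp add: \<phi>_def)
    have "\<psi> w \<in> pverts (P xs)" unfolding 2 pverts_P using 1 s2[OF jb(1)] by blast
    then show ?thesis using 3 by simp
  qed
  have C: "prefix w v \<longleftrightarrow> prefix (\<phi> w) (\<phi> v)" if "v \<in> pverts (P xs)" "w \<in> pverts (P xs)" for v w
  proof (cases w)
    case Nil
    then show ?thesis by (simp add: \<phi>_def)
  next
    case (Cons j b)
    note W = this
    then have jb: "j < length xs" "b \<in> pverts (xs ! j)" using that by (auto simp: pverts_P)
    show ?thesis
    proof (cases v)
      case Nil
      then show ?thesis using W by (simp add: \<phi>_def)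
    next
      case (Cons i a)
      note V = this
      then have ia: "i < length xs" "a \<in> pverts (xs ! i)" using that by (auto simp: pverts_P)
      have inj: "\<sigma> j = \<sigma> i \<longleftrightarrow> j = i" using s1 ia jb by metis
      show ?thesis
      proof (cases "j = i")
        case True
        have iso: "isoS (pverts (xs ! i)) (pverts (ys ! \<sigma> i)) (F i) (H i)" using FH ia by auto
        then have "prefix b a \<longleftrightarrow> prefix (F i b) (F i a)" using True ia jb unfolding isoS_def by blast
        then show ?thesis using W V True by (simp add: \<phi>_def)
      next
        case False
        then show ?thesis using W V inj by (simp add: \<phi>_def)
      qed
    qed
  qed
  have "isoS (pverts (P xs)) (pverts (P ys)) \<phi> \<psi>"
    unfolding isoS_def using A B C by blast
  then show ?case using q by blast
qed

lemma forget_surj: "\<exists>p. forget p = t"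
proof (induction t)
  case (Node N)
  obtain ns where N: "N = mset ns" by (metis ex_mset)
  define xs where "xs = map (\<lambda>t. SOME p. forget p = t) ns"
  have "\<forall>t\<in>set ns. forget (SOME p. forget p = t) = t"
  proof
    fix t assume "t \<in> set ns"
    then have "\<exists>p. forget p = t" using Node.IH N by simp
    then show "forget (SOME p. forget p = t) = t" by (rule someI_ex)
  qed
  then have "map forget xs = ns"
    unfolding xs_def by (simp add: map_idI)
  then have "forget (P xs) = Node N" using N by simp
  then show ?case by blast
qed

lemma forget_plane_rep[simp]: "forget (plane_rep t) = t"
  unfolding plane_rep_def using forget_surj by (rule someI_ex)

lemma sym_card_forget: "forget p = t \<Longrightarrow> sym_card t = card (paut p)"
proof -
  assume "forget p = t"
  then have "forget (plane_rep t) = forget p" by simp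
  then obtain \<phi> \<psi> where "isoS (pverts (plane_rep t)) (pverts p) \<phi> \<psi>" using iso_exists by blast
  then show ?thesis unfolding sym_card_def paut_autS by (rule iso_card)
qed

lemma sym_card_bullet: "sym_card bullet = 1"
proof -
  have "forget (P []) = bullet" by simp
  then have "sym_card bullet = card (paut (P []))" by (rule sym_card_forget)
  also have V: "pverts (P []) = {[]}" by (auto simp: pverts_P)
  have "autS {[]} = {id}"
  proof
    show "{id} \<subseteq> autS {[]}" by (simp add: autS_def)
    show "autS {[]} \<subseteq> {id}"
    proof
      fix f assume f: "f \<in> autS {[]}"
      then have "f [] = []" unfolding autS_def by (auto dest: bij_betwE)
      moreover have "\<And>a. a \<noteq> [] \<Longrightarrow> f a = a" using f unfolding autS_def by auto
      ultimately have "f = id" by (metis eq_id_iff)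
      then show "f \<in> {id}" by simp
    qed
  qed
  then have "card (paut (P [])) = 1" unfolding paut_autS V by simp
  finally show ?thesis .
qed

lemma aut_root:
  assumes g: "g \<in> autS (insert [] (Cons 0 ` V))"
  shows "g [] = []" and "\<And>v. v \<in> V \<Longrightarrow> \<exists>w\<in>V. g (0 # v) = 0 # w"
proof -
  let ?V' = "insert [] (Cons 0 ` V)"
  have b: "bij_betw g ?V' ?V'" and ord: "\<forall>v\<in>?V'. \<forall>w\<in>?V'. prefix w v \<longleftrightarrow> prefix (g w) (g v)"
    using g by (auto simp: autS_def)
  obtain x where x: "x \<in> ?V'" "g x = []" using b by (metis bij_betw_imp_surj_on imageE insertI1)
  have "prefix (g []) (g x)" using ord x(1) by auto
  then show g0: "g [] = []" using x(2) by simp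
  fix v assume v: "v \<in> V"
  have "g (0 # v) \<in> ?V'" using b v by (auto dest: bij_betwE)
  moreover have "g (0 # v) \<noteq> []"
  proof
    assume "g (0 # v) = []"
    then have "g (0 # v) = g []" using g0 by simp
    then show False using b v unfolding bij_betw_def inj_on_def by blast
  qed
  ultimately show "\<exists>w\<in>V. g (0 # v) = 0 # w" by auto
qed

lemma root_card: "card (autS (insert [] (Cons 0 ` V))) = card (autS V)"
proof -
  let ?V' = "insert [] (Cons 0 ` V)"
  define ext where "ext f = (\<lambda>a. if a \<in> Cons 0 ` V then 0 # f (tl a) else a)" for f :: "nat list \<Rightarrow> nat list"
  define res where "res g = (\<lambda>a. if a \<in> V then tl (g (0 # a)) else a)" for g :: "nat list \<Rightarrow> nat list"
  have ext_in: "ext f \<in> autS ?V'" if f: "f \<in> autS V" for f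
  proof -
    have bf: "bij_betw f V V" and of: "\<forall>v\<in>V. \<forall>w\<in>V. prefix w v \<longleftrightarrow> prefix (f w) (f v)"
      and idf: "\<forall>a. a \<notin> V \<longrightarrow> f a = a" using f by (auto simp: autS_def)
    define f' where "f' = inv_into V f"
    have l: "\<forall>a\<in>V. f' (f a) = a" and r: "\<forall>b\<in>V. f (f' b) = b" and fi: "\<forall>a\<in>V. f a \<in> V" and fi': "\<forall>b\<in>V. f' b \<in> V"
      using bf unfolding f'_def bij_betw_def
      by (auto simp: inv_into_f_f f_inv_into_f inv_into_into)
    have "bij_betw (ext f) ?V' ?V'"
    proof (rule bij_betw_byWitness[where f'="ext f'"])
      show "\<forall>a\<in>?V'. ext f' (ext f a) = a" using l fi by (auto simp: ext_def)
      show "\<forall>a\<in>?V'. ext f (ext f' a) = a" using r fi' by (auto simp: ext_def)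
      show "ext f ` ?V' \<subseteq> ?V'" using fi by (auto simp: ext_def)
      show "ext f' ` ?V' \<subseteq> ?V'" using fi' by (auto simp: ext_def)
    qed
    moreover have "\<forall>a. a \<notin> ?V' \<longrightarrow> ext f a = a" by (auto simp: ext_def)
    moreover have "\<forall>v\<in>?V'. \<forall>w\<in>?V'. prefix w v \<longleftrightarrow> prefix (ext f w) (ext f v)"
      using of fi by (auto simp: ext_def)
    ultimately show ?thesis by (simp add: autS_def)
  qed
  have res_in: "res g \<in> autS V" if g: "g \<in> autS ?V'" for g
  proof -
    have g0: "g [] = []" using aut_root(1)[OF g] .
    have gC: "\<And>v. v \<in> V \<Longrightarrow> \<exists>w\<in>V. g (0 # v) = 0 # w" using aut_root(2)[OF g] .
    have bg: "bij_betw g ?V' ?V'" and og: "\<forall>v\<in>?V'. \<forall>w\<in>?V'. prefix w v \<longleftrightarrow> prefix (g w) (g v)"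
      using g by (auto simp: autS_def)
    have rv: "\<And>v. v \<in> V \<Longrightarrow> res g v \<in> V \<and> g (0 # v) = 0 # res g v"
      using gC by (fastforce simp: res_def)
    have inj: "inj_on (res g) V"
    proof
      fix v1 v2 assume v: "v1 \<in> V" "v2 \<in> V" "res g v1 = res g v2"
      then have "g (0 # v1) = g (0 # v2)" using rv by metis
      then show "v1 = v2" using bg v unfolding bij_betw_def inj_on_def by blast
    qed
    have img: "res g ` V = V"
    proof
      show "res g ` V \<subseteq> V" using rv by auto
      show "V \<subseteq> res g ` V"
      proof
        fix w assume w: "w \<in> V"
        then have "0 # w \<in> g ` ?V'" using bg by (simp add: bij_betw_def)
        then obtain x where x: "x \<in> ?V'" "0 # w = g x" by (rule imageE)
        then have "x \<noteq> []" using g0 by auto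
        then obtain v where v: "v \<in> V" "x = 0 # v" using x(1) by auto
        have "g (0 # v) = 0 # res g v" using rv v(1) by blast
        then have "res g v = w" using x v by simp
        then show "w \<in> res g ` V" using v by blast
      qed
    qed
    have "bij_betw (res g) V V" using inj img by (simp add: bij_betw_def)
    moreover have "\<forall>a. a \<notin> V \<longrightarrow> res g a = a" by (auto simp: res_def)
    moreover have "\<forall>v\<in>V. \<forall>w\<in>V. prefix w v \<longleftrightarrow> prefix (res g w) (res g v)"
    proof (intro ballI)
      fix v w assume vw: "v \<in> V" "w \<in> V"
      have "prefix w v \<longleftrightarrow> prefix (0 # w) (0 # v)" by simp
      also have "\<dots> \<longleftrightarrow> prefix (g (0 # w)) (g (0 # v))" using og vw by auto
      also have "\<dots> \<longleftrightarrow> prefix (res g w) (res g v)" using rv vw by simp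
      finally show "prefix w v \<longleftrightarrow> prefix (res g w) (res g v)" .
    qed
    ultimately show ?thesis by (simp add: autS_def)
  qed
  have "bij_betw ext (autS V) (autS ?V')"
  proof (rule bij_betw_byWitness[where f'=res])
    show "\<forall>f\<in>autS V. res (ext f) = f"
    proof
      fix f assume f: "f \<in> autS V"
      show "res (ext f) = f"
      proof
        fix a show "res (ext f) a = f a" using f by (auto simp: res_def ext_def autS_def)
      qed
    qed
    show "\<forall>g\<in>autS ?V'. ext (res g) = g"
    proof
      fix g assume g: "g \<in> autS ?V'"
      have g0: "g [] = []" using aut_root(1)[OF g] .
      have gC: "\<And>v. v \<in> V \<Longrightarrow> \<exists>w\<in>V. g (0 # v) = 0 # w" using aut_root(2)[OF g] .
      have out: "\<And>a. a \<notin> ?V' \<Longrightarrow> g a = a" using g by (auto simp: autS_def)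
      show "ext (res g) = g"
      proof
        fix a
        show "ext (res g) a = g a"
        proof (cases "a \<in> Cons 0 ` V")
          case True
          then obtain v where v: "v \<in> V" "a = 0 # v" by auto
          then show ?thesis using gC[OF v(1)] by (auto simp: ext_def res_def)
        next
          case False
          then show ?thesis using g0 out by (cases "a = []") (auto simp: ext_def)
        qed
      qed
    qed
    show "ext ` autS V \<subseteq> autS ?V'" using ext_in by blast
    show "res ` autS ?V' \<subseteq> autS V" using res_in by blast
  qed
  then show ?thesis by (metis bij_betw_same_card)
qed

lemma pverts_P1: "pverts (P [p]) = insert [] (Cons 0 ` pverts p)"
  by (auto simp: pverts_P)

lemma sym_card_B: "sym_card (Node {#r#}) = sym_card r"
proof -
  have "forget (P [plane_rep r]) = Node {#r#}" by simp
  then have "sym_card (Node {#r#}) = card (paut (P [plane_rep r]))" by (rule sym_card_forget)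
  also have "\<dots> = card (autS (pverts (plane_rep r)))" unfolding paut_autS pverts_P1 by (rule root_card)
  also have "\<dots> = sym_card r" unfolding sym_card_def paut_autS ..
  finally show ?thesis .
qed


abbreviation supp :: "('a \<Rightarrow> 'k::zero) \<Rightarrow> 'a set" where
  "supp x \<equiv> {t. x t \<noteq> 0}"

definition cnt :: "rtree \<Rightarrow> rtree \<Rightarrow> rtree \<Rightarrow> 'k::field" where
  "cnt t t' r = of_nat (count (gl_trees t t') r)"

lemma GLsum:
  fixes x y :: "'k::field kT"
  assumes "finite S" "supp x \<subseteq> S" "finite S'" "supp y \<subseteq> S'"
  shows "gl x y r = (\<Sum>t\<in>S. \<Sum>t'\<in>S'. x t * y t' * cnt t t' r)"
proof -
  have "gl x y r = (\<Sum>t\<in>supp x. \<Sum>t'\<in>supp y. x t * y t' * cnt t t' r)"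
    unfolding gl_def cnt_def by simp
  also have "\<dots> = (\<Sum>t\<in>supp x. \<Sum>t'\<in>S'. x t * y t' * cnt t t' r)"
    by (intro sum.cong refl sum.mono_neutral_left) (use assms in auto)
  also have "\<dots> = (\<Sum>t\<in>S. \<Sum>t'\<in>S'. x t * y t' * cnt t t' r)"
    by (intro sum.mono_neutral_left) (use assms in auto)
  finally show ?thesis .
qed

lemma gl_zero_right[simp]: "gl x (\<lambda>_. 0) = (\<lambda>_. 0)"
  unfolding gl_def by simp

lemma finsupp_gl:
  fixes x y :: "'k::field kT"
  assumes "finsupp x" "finsupp y"
  shows "finsupp (gl x y)"
proof -
  let ?U = "\<Union>t\<in>supp x. \<Union>t'\<in>supp y. set_mset (gl_trees t t')"
  have "finite ?U" using assms by (auto simp: finsupp_def)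
  moreover have "supp (gl x y) \<subseteq> ?U"
  proof
    fix r assume "r \<in> supp (gl x y)"
    then have "gl x y r \<noteq> 0" by simp
    then obtain t t' where "t \<in> supp x" "t' \<in> supp y" "count (gl_trees t t') r \<noteq> 0"
      unfolding gl_def by (metis (no_types, lifting) mult_zero_right of_nat_0 sum.neutral)
    then show "r \<in> ?U" by (auto simp: count_eq_zero_iff)
  qed
  ultimately show ?thesis unfolding finsupp_def by (rule finite_subset[rotated])
qed

lemma gl_bullet_right:
  fixes x :: "'k::field kT"
  assumes "finsupp x"
  shows "gl x (basis bullet) = x"
proof
  fix r
  have fs: "finite (supp x)" using assms by (simp add: finsupp_def)
  have "gl x (basis bullet) r = (\<Sum>t\<in>supp x. \<Sum>t'\<in>{bullet}. x t * basis bullet t' * cnt t t' r)"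
    by (rule GLsum) (use fs in \<open>auto simp: basis_def\<close>)
  also have "\<dots> = (\<Sum>t\<in>supp x. if t = r then x t else 0)"
    by (intro sum.cong refl) (simp add: basis_def cnt_def gl_trees_bullet_right)
  also have "\<dots> = x r" using fs by (simp add: sum.delta')
  finally show "gl x (basis bullet) r = x r" .
qed

lemma gl_bullet_left:
  fixes y :: "'k::field kT"
  assumes "finsupp y"
  shows "gl (basis bullet) y = y"
proof
  fix r
  have fs: "finite (supp y)" using assms by (simp add: finsupp_def)
  have "gl (basis bullet) y r = (\<Sum>t\<in>{bullet}. \<Sum>t'\<in>supp y. basis bullet t * y t' * cnt t t' r)"
    by (rule GLsum) (use fs in \<open>auto simp: basis_def\<close>)
  also have "\<dots> = (\<Sum>t'\<in>supp y. y t' * cnt bullet t' r)"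
    by (simp add: basis_def)
  also have "\<dots> = (\<Sum>t'\<in>supp y. if t' = r then y t' else 0)"
    by (intro sum.cong refl) (simp add: basis_def cnt_def gl_trees_bullet_left)
  also have "\<dots> = y r" using fs by (simp add: sum.delta')
  finally show "gl (basis bullet) y r = y r" .
qed

lemma gl_at_bullet:
  fixes x y :: "'k::field kT"
  assumes "finsupp x" "finsupp y"
  shows "gl x y bullet = x bullet * y bullet"
proof -
  have fs: "finite (supp x)" "finite (supp y)" using assms by (auto simp: finsupp_def)
  have "gl x y bullet = (\<Sum>t\<in>insert bullet (supp x). \<Sum>t'\<in>insert bullet (supp y). x t * y t' * cnt t t' bullet)"
    by (rule GLsum) (use fs in auto)
  also have "\<dots> = (\<Sum>t\<in>insert bullet (supp x). if t = bullet then x bullet * y bullet else 0)"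
    by (intro sum.cong refl) (simp add: cnt_def T_bul if_distrib sum.delta' fs cong: if_cong)
  also have "\<dots> = x bullet * y bullet" using fs by (simp add: sum.delta')
  finally show ?thesis .
qed

lemma finsupp_basis: "finsupp (basis t :: 'k::field kT)"
  unfolding finsupp_def basis_def by simp

lemma finsupp_zero: "finsupp (\<lambda>_. 0 :: 'k::field)"
  unfolding finsupp_def by simp

definition chd :: "rtree \<Rightarrow> rtree" where
  "chd t = (case t of Node N \<Rightarrow> (SOME s. N = {#s#}))"

lemma chd_NS[simp]: "chd (Node {#s#}) = s"
  unfolding chd_def by simp

lemma cnt_one_tree: "count (gl_trees t t') (Node {#r#}) =
   (if t' = bullet \<and> t = Node {#r#} then 1 else 0) +
   (if t' \<in> range (\<lambda>s. Node {#s#}) then count (gl_trees t (chd t')) r else 0)"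
proof -
  obtain N where t': "t' = Node N" by (cases t')
  consider "N = {#}" | s where "N = {#s#}" | "2 \<le> size N"
    by (metis One_nat_def less_2_cases not_le size_1_singleton_mset size_eq_0_iff_empty)
  then show ?thesis
  proof cases
    case 1
    then show ?thesis using t' by (auto simp: gl_trees_bullet_right)
  next
    case 2
    then show ?thesis using t' by (auto simp: T_one)
  next
    case 3
    then have "t' \<notin> range (\<lambda>s. Node {#s#})" "t' \<noteq> bullet" using t' by auto
    then show ?thesis using T_big[OF 3] t' by simp
  qed
qed

lemma cnt_one: "cnt t t' (Node {#r#}) =
   (if t' = bullet \<and> t = Node {#r#} then 1 else 0) +
   (if t' \<in> range (\<lambda>s. Node {#s#}) then cnt t (chd t') r else 0)"
  unfolding cnt_def cnt_one_tree by (simp split: if_splits)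

lemma Bminus_gl:
  fixes x y :: "'k::field kT"
  assumes "finsupp x" "finsupp y"
  shows "Bminus (gl x y) = (\<lambda>r. y bullet * x (Node {#r#}) + gl x (Bminus y) r)"
proof
  fix r
  let ?NS = "\<lambda>s. Node {#s#}"
  define Sx where "Sx = supp x"
  define Sy where "Sy = insert bullet (supp y)"
  define B where "B = ?NS -` Sy"
  have fSx: "finite Sx" and fSy: "finite Sy" using assms by (auto simp: finsupp_def Sx_def Sy_def)
  have injNS: "inj ?NS" by (simp add: inj_def)
  have fB: "finite B" unfolding B_def using fSy injNS by (simp add: finite_vimageI)
  have inner: "(\<Sum>t'\<in>Sy. y t' * cnt t t' (Node {#r#})) =
      (if t = Node {#r#} then y bullet else 0) + (\<Sum>s\<in>B. y (?NS s) * cnt t s r)" for t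
  proof -
    have "(\<Sum>t'\<in>Sy. y t' * cnt t t' (Node {#r#})) =
       (\<Sum>t'\<in>Sy. (if t' = bullet \<and> t = Node {#r#} then y t' else 0)) +
       (\<Sum>t'\<in>Sy. if t' \<in> range ?NS then y t' * cnt t (chd t') r else 0)"
    proof -
      have "y t' * cnt t t' (Node {#r#}) = (if t' = bullet \<and> t = Node {#r#} then y t' else 0) +
         (if t' \<in> range ?NS then y t' * cnt t (chd t') r else 0)" for t'
        unfolding cnt_one by (simp add: distrib_left)
      then show ?thesis by (simp add: sum.distrib)
    qed
    also have "(\<Sum>t'\<in>Sy. (if t' = bullet \<and> t = Node {#r#} then y t' else 0)) = (if t = Node {#r#} then y bullet else 0)"
      using fSy by (cases "t = Node {#r#}") (auto simp: Sy_def sum.delta')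
    also have "(\<Sum>t'\<in>Sy. if t' \<in> range ?NS then y t' * cnt t (chd t') r else 0) =
       (\<Sum>t'\<in>Sy \<inter> range ?NS. y t' * cnt t (chd t') r)"
      using fSy by (simp add: sum.inter_restrict)
    also have "Sy \<inter> range ?NS = ?NS ` B" unfolding B_def by auto
    also have "(\<Sum>t'\<in>?NS ` B. y t' * cnt t (chd t') r) = (\<Sum>s\<in>B. y (?NS s) * cnt t s r)"
      by (subst sum.reindex) (use injNS in \<open>auto simp: inj_on_def\<close>)
    finally show ?thesis .
  qed
  have "Bminus (gl x y) r = gl x y (?NS r)" by (simp add: Bminus_def)
  also have "\<dots> = (\<Sum>t\<in>Sx. \<Sum>t'\<in>Sy. x t * y t' * cnt t t' (?NS r))"
    by (rule GLsum) (use fSx fSy in \<open>auto simp: Sx_def Sy_def\<close>)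
  also have "\<dots> = (\<Sum>t\<in>Sx. x t * (\<Sum>t'\<in>Sy. y t' * cnt t t' (?NS r)))"
    by (simp add: sum_distrib_left mult.assoc)
  also have "\<dots> = (\<Sum>t\<in>Sx. x t * (if t = ?NS r then y bullet else 0)) + (\<Sum>t\<in>Sx. \<Sum>s\<in>B. x t * Bminus y s * cnt t s r)"
    unfolding inner by (simp add: distrib_left sum.distrib sum_distrib_left Bminus_def mult.assoc)
  also have "(\<Sum>t\<in>Sx. x t * (if t = ?NS r then y bullet else 0)) = y bullet * x (?NS r)"
    using fSx by (cases "?NS r \<in> Sx") (auto simp: Sx_def if_distrib sum.delta' cong: if_cong)
  also have "(\<Sum>t\<in>Sx. \<Sum>s\<in>B. x t * Bminus y s * cnt t s r) = gl x (Bminus y) r"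
    by (rule GLsum[symmetric]) (use fSx fB in \<open>auto simp: Sx_def B_def Sy_def Bminus_def\<close>)
  finally show "Bminus (gl x y) r = y bullet * x (?NS r) + gl x (Bminus y) r" .
qed

lemma sum3:
  fixes g :: "'i \<Rightarrow> 'j \<Rightarrow> 'k::comm_semiring_1"
  shows "(\<Sum>m\<in>M. (\<Sum>i\<in>I. \<Sum>j\<in>J. g i j * h i j m) * k m) = (\<Sum>i\<in>I. \<Sum>j\<in>J. g i j * (\<Sum>m\<in>M. h i j m * k m))"
proof -
  have "(\<Sum>m\<in>M. (\<Sum>i\<in>I. \<Sum>j\<in>J. g i j * h i j m) * k m) = (\<Sum>m\<in>M. \<Sum>i\<in>I. \<Sum>j\<in>J. g i j * (h i j m * k m))"
    by (simp add: sum_distrib_right mult.assoc)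
  also have "\<dots> = (\<Sum>i\<in>I. \<Sum>m\<in>M. \<Sum>j\<in>J. g i j * (h i j m * k m))"
    by (rule sum.swap)
  also have "\<dots> = (\<Sum>i\<in>I. \<Sum>j\<in>J. \<Sum>m\<in>M. g i j * (h i j m * k m))"
    by (rule sum.cong[OF refl], rule sum.swap)
  also have "\<dots> = (\<Sum>i\<in>I. \<Sum>j\<in>J. g i j * (\<Sum>m\<in>M. h i j m * k m))"
    by (simp add: sum_distrib_left)
  finally show ?thesis .
qed

lemma msum:
  fixes g :: "'a \<Rightarrow> 'k::comm_semiring_1"
  assumes "finite S" "set_mset M \<subseteq> S"
  shows "(\<Sum>m\<in>S. of_nat (count M m) * g m) = (\<Sum>m\<in>#M. g m)"
  using assms(2)
proof (induction M)
  case empty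
  then show ?case by simp
next
  case (add a M)
  have "(\<Sum>m\<in>S. of_nat (count (add_mset a M) m) * g m) = (\<Sum>m\<in>S. of_nat (count M m) * g m) + (\<Sum>m\<in>S. if m = a then g m else 0)"
    by (simp add: sum.distrib[symmetric]) (intro sum.cong refl, auto simp: distrib_right add.commute)
  also have "(\<Sum>m\<in>S. if m = a then g m else 0) = g a" using add.prems assms(1) by (simp add: sum.delta')
  finally show ?case using add by (simp add: add.commute)
qed

lemma count_sum_mset_of: "(of_nat (count (\<Sum>m\<in>#M. F m) r) :: 'k::comm_semiring_1) = (\<Sum>m\<in>#M. of_nat (count (F m) r))"
  by (induction M) auto

lemma sum_mset_sum_swap: "(\<Sum>m\<in>#M. \<Sum>c\<in>C. h m c) = (\<Sum>c\<in>C. \<Sum>m\<in>#M. h m c)"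
  by (induction M) (auto simp: sum.distrib)

lemma supp_gl:
  fixes x y :: "'k::field kT"
  shows "supp (gl x y) \<subseteq> (\<Union>t\<in>supp x. \<Union>t'\<in>supp y. set_mset (gl_trees t t'))"
proof
  fix r assume "r \<in> supp (gl x y)"
  then have "gl x y r \<noteq> 0" by simp
  then obtain t t' where "t \<in> supp x" "t' \<in> supp y" "count (gl_trees t t') r \<noteq> 0"
    unfolding gl_def by (metis (no_types, lifting) mult_zero_right of_nat_0 sum.neutral)
  then show "r \<in> (\<Union>t\<in>supp x. \<Union>t'\<in>supp y. set_mset (gl_trees t t'))" by (auto simp: count_eq_zero_iff)
qed

lemma gl_assoc:
  fixes x y z :: "'k::field kT"
  assumes fx: "finsupp x" and fy: "finsupp y" and fz: "finsupp z"
  shows "gl (gl x y) z = gl x (gl y z)"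
proof
  fix r
  define Sx where "Sx = supp x"
  define Sy where "Sy = supp y"
  define Sz where "Sz = supp z"
  have f: "finite Sx" "finite Sy" "finite Sz" using assms by (auto simp: finsupp_def Sx_def Sy_def Sz_def)
  define Sxy where "Sxy = (\<Union>t\<in>Sx. \<Union>t'\<in>Sy. set_mset (gl_trees t t'))"
  define Syz where "Syz = (\<Union>t\<in>Sy. \<Union>t'\<in>Sz. set_mset (gl_trees t t'))"
  have fxy: "finite Sxy" "finite Syz" using f by (auto simp: Sxy_def Syz_def)
  have sxy: "supp (gl x y) \<subseteq> Sxy" unfolding Sxy_def Sx_def Sy_def by (rule supp_gl)
  have syz: "supp (gl y z) \<subseteq> Syz" unfolding Syz_def Sy_def Sz_def by (rule supp_gl)
  have "gl (gl x y) z r = (\<Sum>m\<in>Sxy. \<Sum>c\<in>Sz. gl x y m * z c * cnt m c r)"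
    by (rule GLsum) (use f fxy sxy in \<open>auto simp: Sz_def\<close>)
  also have "\<dots> = (\<Sum>m\<in>Sxy. (\<Sum>a\<in>Sx. \<Sum>b\<in>Sy. x a * y b * cnt a b m) * (\<Sum>c\<in>Sz. z c * cnt m c r))"
  proof (intro sum.cong refl)
    fix m
    have "gl x y m = (\<Sum>a\<in>Sx. \<Sum>b\<in>Sy. x a * y b * cnt a b m)"
      by (rule GLsum) (use f in \<open>auto simp: Sx_def Sy_def\<close>)
    then show "(\<Sum>c\<in>Sz. gl x y m * z c * cnt m c r) = (\<Sum>a\<in>Sx. \<Sum>b\<in>Sy. x a * y b * cnt a b m) * (\<Sum>c\<in>Sz. z c * cnt m c r)"
      by (simp add: sum_distrib_left mult.assoc)
  qed
  also have "\<dots> = (\<Sum>a\<in>Sx. \<Sum>b\<in>Sy. x a * y b * (\<Sum>m\<in>Sxy. cnt a b m * (\<Sum>c\<in>Sz. z c * cnt m c r)))"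
    by (rule sum3)
  also have "\<dots> = (\<Sum>a\<in>Sx. \<Sum>b\<in>Sy. x a * y b * (\<Sum>c\<in>Sz. z c * of_nat (count (\<Sum>m\<in>#gl_trees a b. gl_trees m c) r)))"
  proof -
    have inner: "(\<Sum>m\<in>Sxy. cnt a b m * (\<Sum>c\<in>Sz. z c * cnt m c r)) = (\<Sum>c\<in>Sz. z c * of_nat (count (\<Sum>m\<in>#gl_trees a b. gl_trees m c) r))"
      if ab: "a \<in> Sx" "b \<in> Sy" for a b
    proof -
      have "(\<Sum>m\<in>Sxy. cnt a b m * (\<Sum>c\<in>Sz. z c * cnt m c r)) = (\<Sum>m\<in>#gl_trees a b. \<Sum>c\<in>Sz. z c * cnt m c r)"
        unfolding cnt_def[of a b] by (rule msum) (use fxy ab in \<open>auto simp: Sxy_def\<close>)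
      also have "\<dots> = (\<Sum>c\<in>Sz. z c * (\<Sum>m\<in>#gl_trees a b. cnt m c r))"
        by (simp add: sum_mset_sum_swap sum_mset_distrib_left)
      also have "\<dots> = (\<Sum>c\<in>Sz. z c * of_nat (count (\<Sum>m\<in>#gl_trees a b. gl_trees m c) r))"
        by (simp add: count_sum_mset_of cnt_def)
      finally show ?thesis .
    qed
    show ?thesis by (intro sum.cong refl) (simp add: inner)
  qed
  also have "\<dots> = (\<Sum>a\<in>Sx. \<Sum>b\<in>Sy. x a * y b * (\<Sum>c\<in>Sz. z c * of_nat (count (\<Sum>m\<in>#gl_trees b c. gl_trees a m) r)))"
    by (simp add: gl_assoc_trees)
  also have "\<dots> = (\<Sum>a\<in>Sx. x a * (\<Sum>b\<in>Sy. \<Sum>c\<in>Sz. y b * z c * (\<Sum>m\<in>#gl_trees b c. cnt a m r)))"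
    by (simp add: sum_distrib_left count_sum_mset_of cnt_def mult.assoc)
  also have "\<dots> = (\<Sum>a\<in>Sx. x a * (\<Sum>b\<in>Sy. \<Sum>c\<in>Sz. y b * z c * (\<Sum>m\<in>Syz. cnt b c m * cnt a m r)))"
  proof -
    have inner: "(\<Sum>m\<in>#gl_trees b c. cnt a m r) = (\<Sum>m\<in>Syz. cnt b c m * cnt a m r)"
      if bc: "b \<in> Sy" "c \<in> Sz" for a b c
      unfolding cnt_def[of b c] by (rule msum[symmetric]) (use fxy bc in \<open>auto simp: Syz_def\<close>)
    show ?thesis by (intro sum.cong refl) (simp add: inner)
  qed
  also have "\<dots> = (\<Sum>a\<in>Sx. x a * (\<Sum>m\<in>Syz. (\<Sum>b\<in>Sy. \<Sum>c\<in>Sz. y b * z c * cnt b c m) * cnt a m r))"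
    by (simp add: sum3)
  also have "\<dots> = (\<Sum>a\<in>Sx. x a * (\<Sum>m\<in>Syz. gl y z m * cnt a m r))"
  proof -
    have inner: "gl y z m = (\<Sum>b\<in>Sy. \<Sum>c\<in>Sz. y b * z c * cnt b c m)" for m
      by (rule GLsum) (use f in \<open>auto simp: Sy_def Sz_def\<close>)
    show ?thesis by (simp add: inner)
  qed
  also have "\<dots> = gl x (gl y z) r"
    by (subst GLsum[of Sx _ Syz]) (use f fxy syz in \<open>auto simp: Sx_def sum_distrib_left mult.assoc\<close>)
  finally show "gl (gl x y) z r = gl x (gl y z) r" .
qed

lemma gl_lin1:
  fixes f :: "'i \<Rightarrow> 'k::field kT"
  assumes W: "finite W" and fw: "\<forall>w\<in>W. finsupp (f w)" and fy: "finsupp y"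
  shows "gl (\<lambda>r. \<Sum>w\<in>W. c w * f w r) y = (\<lambda>r. \<Sum>w\<in>W. c w * gl (f w) y r)"
proof
  fix r
  define S where "S = (\<Union>w\<in>W. supp (f w))"
  have fS: "finite S" using W fw by (auto simp: S_def finsupp_def)
  have fSy: "finite (supp y)" using fy by (simp add: finsupp_def)
  have sub: "supp (\<lambda>r. \<Sum>w\<in>W. c w * f w r) \<subseteq> S"
  proof
    fix t assume "t \<in> supp (\<lambda>r. \<Sum>w\<in>W. c w * f w r)"
    then have "(\<Sum>w\<in>W. c w * f w t) \<noteq> 0" by simp
    then obtain w where "w \<in> W" "c w * f w t \<noteq> 0" by (meson sum.neutral)
    then show "t \<in> S" by (auto simp: S_def)
  qed
  have "gl (\<lambda>r. \<Sum>w\<in>W. c w * f w r) y r = (\<Sum>t\<in>S. \<Sum>t'\<in>supp y. (\<Sum>w\<in>W. c w * f w t) * y t' * cnt t t' r)"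
    by (rule GLsum) (use fS fSy sub in auto)
  also have "\<dots> = (\<Sum>t\<in>S. \<Sum>t'\<in>supp y. \<Sum>w\<in>W. c w * (f w t * y t' * cnt t t' r))"
    by (simp add: sum_distrib_right mult.assoc)
  also have "\<dots> = (\<Sum>t\<in>S. \<Sum>w\<in>W. \<Sum>t'\<in>supp y. c w * (f w t * y t' * cnt t t' r))"
    by (rule sum.cong[OF refl], rule sum.swap)
  also have "\<dots> = (\<Sum>w\<in>W. \<Sum>t\<in>S. \<Sum>t'\<in>supp y. c w * (f w t * y t' * cnt t t' r))"
    by (rule sum.swap)
  also have "\<dots> = (\<Sum>w\<in>W. c w * (\<Sum>t\<in>S. \<Sum>t'\<in>supp y. f w t * y t' * cnt t t' r))"
    by (simp add: sum_distrib_left)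
  also have "\<dots> = (\<Sum>w\<in>W. c w * gl (f w) y r)"
  proof (intro sum.cong refl)
    fix w assume w: "w \<in> W"
    have "gl (f w) y r = (\<Sum>t\<in>S. \<Sum>t'\<in>supp y. f w t * y t' * cnt t t' r)"
      by (rule GLsum) (use fS fSy w in \<open>auto simp: S_def\<close>)
    then show "c w * (\<Sum>t\<in>S. \<Sum>t'\<in>supp y. f w t * y t' * cnt t t' r) = c w * gl (f w) y r" by simp
  qed
  finally show "gl (\<lambda>r. \<Sum>w\<in>W. c w * f w r) y r = (\<Sum>w\<in>W. c w * gl (f w) y r)" .
qed

lemma finsupp_sum:
  fixes f :: "'i \<Rightarrow> 'a \<Rightarrow> 'k::field"
  assumes "finite I" "\<forall>i\<in>I. finsupp (f i)"
  shows "finsupp (\<lambda>r. \<Sum>i\<in>I. c i * f i r)"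
proof -
  have "supp (\<lambda>r. \<Sum>i\<in>I. c i * f i r) \<subseteq> (\<Union>i\<in>I. supp (f i))"
  proof
    fix t assume "t \<in> supp (\<lambda>r. \<Sum>i\<in>I. c i * f i r)"
    then have "(\<Sum>i\<in>I. c i * f i t) \<noteq> 0" by simp
    then obtain i where "i \<in> I" "c i * f i t \<noteq> 0" by (meson sum.neutral)
    then show "t \<in> (\<Union>i\<in>I. supp (f i))" by auto
  qed
  moreover have "finite (\<Union>i\<in>I. supp (f i))" using assms by (auto simp: finsupp_def)
  ultimately show ?thesis unfolding finsupp_def by (rule finite_subset)
qed

lemma tsize_pos: "1 \<le> tsize t"
  by (cases t) auto

lemma size_le_sum: "size N \<le> sum_mset (image_mset tsize N)"
proof (induction N)
  case empty then show ?case by simp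
next
  case (add x N) then show ?case using tsize_pos[of x] by simp
qed

lemma elem_le_sum: "x \<in># N \<Longrightarrow> tsize x \<le> sum_mset (image_mset tsize N)"
proof -
  assume "x \<in># N"
  then obtain N' where "N = add_mset x N'" by (blast dest: multi_member_split)
  then show ?thesis by simp
qed

lemma finite_tsize_le: "finite {t. tsize t \<le> n}"
proof (induction n)
  case 0
  have "\<And>t. tsize t \<noteq> 0" using tsize_pos by (metis not_one_le_zero)
  then have "{t. tsize t \<le> 0} = {}" by simp
  then show ?case by (metis finite.emptyI)
next
  case (Suc n)
  let ?L = "{xs. set xs \<subseteq> {t. tsize t \<le> n} \<and> length xs \<le> n}"
  have "{t. tsize t \<le> Suc n} \<subseteq> Node ` (mset ` ?L)"
  proof
    fix t assume t: "t \<in> {t. tsize t \<le> Suc n}"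
    obtain N where tN: "t = Node N" by (cases t)
    obtain xs where xs: "N = mset xs" by (metis ex_mset)
    have s: "sum_mset (image_mset tsize N) \<le> n" using t tN by simp
    have "length xs \<le> n" using size_le_sum[of N] s xs by simp
    moreover have "set xs \<subseteq> {t. tsize t \<le> n}" using elem_le_sum[of _ N] s xs by fastforce
    ultimately show "t \<in> Node ` (mset ` ?L)" using tN xs by blast
  qed
  moreover have "finite ?L" using Suc by (rule finite_lists_length_le)
  ultimately show ?case by (meson finite_imageI finite_subset)
qed

lemma finsupp_kappa: "finsupp (kappa n :: 'k::field kT)"
proof -
  have "supp (kappa n :: 'k kT) \<subseteq> {t. tsize t \<le> n + 1}" by (auto simp: kappa_def split: if_splits)
  then show ?thesis unfolding finsupp_def using finite_tsize_le by (rule finite_subset)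
qed

declare eps.simps[simp del]

lemma eps_0: "eps 0 = basis bullet"
  by (subst eps.simps) simp

lemma eps_Suc: "0 < n \<Longrightarrow> eps n = (\<lambda>r. \<Sum>j<n. (-1) ^ (n - j - 1) * gl (kappa (n - j)) (eps j) r)"
  by (subst eps.simps) simp

lemma finsupp_eps: "finsupp (eps n :: 'k::field kT)"
proof (induction n rule: less_induct)
  case (less n)
  show ?case
  proof (cases "n = 0")
    case True
    then show ?thesis by (simp add: eps_0 finsupp_basis)
  next
    case False
    have "\<forall>j\<in>{..<n}. finsupp (gl (kappa (n - j)) (eps j) :: 'k kT)"
      using less by (auto intro: finsupp_gl finsupp_kappa)
    then show ?thesis unfolding eps_Suc[OF \<open>n \<noteq> 0\<close>[unfolded neq0_conv]]
      by (intro finsupp_sum) auto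
  qed
qed

lemma Z_word_Nil: "Z_word [] = basis bullet"
  by (simp add: Z_word_def)

lemma Z_word_Cons: "Z_word (j # v) = gl (eps j) (Z_word v)"
  by (simp add: Z_word_def)

lemma finsupp_Z_word: "finsupp (Z_word w :: 'k::field kT)"
  by (induction w) (auto simp: Z_word_Nil Z_word_Cons finsupp_basis intro: finsupp_gl finsupp_eps)

lemma kappa_bullet: "0 < m \<Longrightarrow> kappa m bullet = 0"
  by (simp add: kappa_def)

lemma eps_bullet: "0 < n \<Longrightarrow> eps n bullet = (0 :: 'k::field)"
  unfolding eps_Suc by (simp add: gl_at_bullet finsupp_kappa finsupp_eps kappa_bullet)

lemma Z_word_bullet: "\<forall>j\<in>set w. 1 \<le> j \<Longrightarrow> Z_word w bullet = (if w = [] then 1 else (0 :: 'k::field))"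
  by (cases w) (auto simp: Z_word_Nil Z_word_Cons basis_def gl_at_bullet finsupp_eps finsupp_Z_word eps_bullet)

lemma tsize_one: "tsize t = Suc 0 \<longleftrightarrow> t = bullet"
proof (cases t)
  case (Node N)
  have "sum_mset (image_mset tsize N) = 0 \<longleftrightarrow> N = {#}"
    using size_le_sum[of N] by (metis le_zero_eq size_eq_0_iff_empty sum_mset.empty image_mset_empty)
  then show ?thesis using Node by simp
qed

lemma kappa_0: "kappa 0 = basis bullet"
proof
  fix t show "kappa 0 t = basis bullet t"
    by (cases "t = bullet") (auto simp: kappa_def basis_def tsize_one sym_card_bullet)
qed

lemma Bminus_kappa: "0 < n \<Longrightarrow> Bminus (kappa n) = kappa (n - 1)"
  by (auto simp: Bminus_def kappa_def sym_card_B)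

lemma Bminus_basis_bullet: "Bminus (basis bullet) = (\<lambda>_. 0)"
  by (auto simp: Bminus_def basis_def)

lemma Bminus_gl_ke: "Bminus (gl (kappa m) (eps j)) r = eps j bullet * kappa m (Node {#r#}) + gl (kappa m) (Bminus (eps j)) r"
  by (simp add: Bminus_gl finsupp_kappa finsupp_eps)

lemma Bminus_eps: "Bminus (eps n :: 'k::field kT) = (if n = 1 then basis bullet else (\<lambda>_. 0))"
proof (induction n rule: less_induct)
  case (less n)
  show ?case
  proof (cases "n = 0")
    case True
    then show ?thesis by (simp add: eps_0 Bminus_basis_bullet)
  next
    case False
    then have n0: "0 < n" by simp
    show ?thesis
    proof
      fix r
      define T where "T j = (-1) ^ (n - j - 1) * (eps j bullet * kappa (n - j) (Node {#r#}) + gl (kappa (n - j)) (Bminus (eps j)) r :: 'k)" for j :: nat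
      have "Bminus (eps n) r = (\<Sum>j<n. (-1) ^ (n - j - 1) * Bminus (gl (kappa (n - j)) (eps j)) r)"
        by (simp add: Bminus_def eps_Suc[OF n0])
      also have "\<dots> = (\<Sum>j<n. T j)"
      proof -
        show ?thesis unfolding T_def by (intro sum.cong refl) (simp only: Bminus_gl_ke)
      qed
      also have "\<dots> = T 0 + (\<Sum>j\<in>{1..<n}. T j)"
      proof -
        have "{..<n} = insert 0 {1..<n}" using n0 by auto
        then show ?thesis by simp
      qed
      also have "(\<Sum>j\<in>{1..<n}. T j) = (\<Sum>j\<in>{1..<n}. if j = 1 then (-1) ^ (n - 2) * kappa (n - 1) r else 0)"
      proof (intro sum.cong refl)
        fix j assume j: "j \<in> {1..<n}"
        then have "eps j bullet = (0 :: 'k)" by (intro eps_bullet) auto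
        moreover have "Bminus (eps j :: 'k kT) = (if j = 1 then basis bullet else (\<lambda>_. 0))" using less j by auto
        ultimately show "T j = (if j = 1 then (-1) ^ (n - 2) * kappa (n - 1) r else 0)"
          by (auto simp: T_def gl_bullet_right finsupp_kappa numeral_2_eq_2)
      qed
      also have "\<dots> = (if 1 < n then (-1) ^ (n - 2) * kappa (n - 1) r else 0)"
        by (simp add: sum.delta)
      also have "T 0 = (-1) ^ (n - 1) * kappa (n - 1) r"
      proof -
        have kn: "kappa n (Node {#r#}) = (kappa (n - 1) r :: 'k)"
          using fun_cong[OF Bminus_kappa[OF n0], of r] by (simp add: Bminus_def)
        have e0: "Bminus (eps 0) = (\<lambda>_. 0 :: 'k)" by (simp only: eps_0 Bminus_basis_bullet)
        have e1: "eps 0 bullet = (1 :: 'k)" by (simp add: eps_0 basis_def)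
        show ?thesis by (simp add: T_def e0 e1 kn)
      qed
      finally have e: "Bminus (eps n) r = ((-1) ^ (n - 1) * kappa (n - 1) r + (if 1 < n then (-1) ^ (n - 2) * kappa (n - 1) r else 0) :: 'k)" .
      show "Bminus (eps n) r = (if n = 1 then basis bullet else (\<lambda>_. 0 :: 'k)) r"
      proof (cases "n = 1")
        case True
        then show ?thesis using e by (simp add: kappa_0)
      next
        case False
        then have "n - 1 = Suc (n - 2)" using n0 by simp
        then have "(-1 :: 'k) ^ (n - 1) = - ((-1) ^ (n - 2))" by simp
        then show ?thesis using e False n0 by simp
      qed
    qed
  qed
qed

lemma Bminus_Z_word: "\<forall>j\<in>set w. 1 \<le> j \<Longrightarrow>
  Bminus (Z_word w :: 'k::field kT) = (if w \<noteq> [] \<and> last w = 1 then Z_word (butlast w) else (\<lambda>_. 0))"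
proof (induction w)
  case Nil
  then show ?case by (simp add: Z_word_Nil Bminus_basis_bullet)
next
  case (Cons j v)
  have "Bminus (Z_word (j # v) :: 'k kT) = (\<lambda>r. Z_word v bullet * eps j (Node {#r#}) + gl (eps j) (Bminus (Z_word v)) r)"
    unfolding Z_word_Cons by (rule Bminus_gl) (auto intro: finsupp_eps finsupp_Z_word)
  also have "\<dots> = (if j # v \<noteq> [] \<and> last (j # v) = 1 then Z_word (butlast (j # v)) else (\<lambda>_. 0))"
  proof (cases "v = []")
    case True
    have zb1: "Z_word v bullet = (1::'k)" using True by (simp add: Z_word_Nil basis_def)
    have zb2: "Bminus (Z_word v) = (\<lambda>_. 0::'k)" using True by (simp only: Z_word_Nil Bminus_basis_bullet)
    note zb = zb1 zb2
    have "(\<lambda>r. Z_word v bullet * eps j (Node {#r#}) + gl (eps j) (Bminus (Z_word v)) r) = Bminus (eps j :: 'k kT)"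
      unfolding zb by (simp add: Bminus_def)
    then show ?thesis using True by (simp add: Bminus_eps Z_word_Nil)
  next
    case False
    have "Z_word v bullet = (0 :: 'k)" using Cons.prems False by (simp add: Z_word_bullet)
    then show ?thesis using Cons False by (auto simp: Z_word_Cons)
  qed
  finally show ?case .
qed

lemma ladder2: "ladder 2 = Node {#bullet#}"
  by (simp add: ladder_def Bplus_def numeral_2_eq_2)

lemma tsize_two: "tsize t = Suc (Suc 0) \<longleftrightarrow> t = Node {#bullet#}"
proof
  assume t: "tsize t = Suc (Suc 0)"
  obtain N where tN: "t = Node N" by (cases t)
  have s: "sum_mset (image_mset tsize N) = 1" using t tN by simp
  then have "N \<noteq> {#}" by auto
  then obtain x N' where N: "N = add_mset x N'" by (metis multiset_cases)
  have "tsize x + sum_mset (image_mset tsize N') = 1" using s N by simp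
  moreover have "1 \<le> tsize x" by (rule tsize_pos)
  moreover have "size N' \<le> sum_mset (image_mset tsize N')" by (rule size_le_sum)
  ultimately have "tsize x = 1" "size N' = 0" by linarith+
  then have "tsize x = 1" "N' = {#}" by auto
  then show "t = Node {#bullet#}" using tN N tsize_one by auto
qed auto

lemma eps_1: "eps 1 = (basis (ladder 2) :: 'k::field kT)"
proof -
  have "eps 1 = (gl (kappa 1) (eps 0) :: 'k kT)"
    by (simp add: eps_Suc)
  also have "\<dots> = kappa 1" by (simp add: eps_0 gl_bullet_right finsupp_kappa)
  also have "\<dots> = basis (ladder 2)"
  proof
    fix t show "kappa 1 t = (basis (ladder 2) :: 'k kT) t"
      by (cases "t = Node {#bullet#}") (auto simp: kappa_def basis_def ladder2 tsize_two sym_card_B sym_card_bullet)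
  qed
  finally show ?thesis .
qed

lemma Z_word_snoc: "Z_word (v @ [1]) = gl (Z_word v) (eps 1 :: 'k::field kT)"
proof (induction v)
  case Nil
  then show ?case by (simp add: Z_word_def gl_bullet_right gl_bullet_left finsupp_eps)
next
  case (Cons j v)
  have "Z_word ((j # v) @ [1]) = gl (eps j) (gl (Z_word v) (eps 1) :: 'k kT)"
    using Cons by (simp add: Z_word_Cons)
  also have "\<dots> = gl (gl (eps j) (Z_word v)) (eps 1)"
    by (rule gl_assoc[symmetric]) (auto intro: finsupp_eps finsupp_Z_word)
  finally show ?case by (simp add: Z_word_Cons)
qed

theorem mainTheorem6:
  fixes u :: "nat list \<Rightarrow> 'k::field_char_0"
  assumes "is_nsym u"
  shows "Z (alpha_plus u) = Bminus (Pi_proj (Z u)) \<and>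
         (Z (alpha_minus u) = Z u \<circ>\<^sub>G\<^sub>L eps 1 \<and> Z u \<circ>\<^sub>G\<^sub>L eps 1 = Z u \<circ>\<^sub>G\<^sub>L basis (ladder 2))"
proof -
  have fin: "finite {w. u w \<noteq> 0}" using assms by (simp add: is_nsym_def finsupp_def)
  have lett: "\<And>w. u w \<noteq> 0 \<Longrightarrow> \<forall>j\<in>set w. 1 \<le> j" using assms by (simp add: is_nsym_def)
  let ?snoc = "\<lambda>v. v @ [1::nat]"
  have inj_snoc: "inj ?snoc" by (simp add: inj_def)
  have P1: "Z (alpha_plus u) = Bminus (Pi_proj (Z u))"
  proof
    fix r
    have "Bminus (Pi_proj (Z u)) r = Z u (Node {#r#})" by (auto simp: Bminus_def Pi_proj_def)
    also have "\<dots> = (\<Sum>w\<in>{w. u w \<noteq> 0}. u w * Bminus (Z_word w) r)"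
      by (simp add: Z_def Bminus_def)
    also have "\<dots> = (\<Sum>w\<in>{w. u w \<noteq> 0}. if w \<noteq> [] \<and> last w = 1 then u w * Z_word (butlast w) r else 0)"
    proof (intro sum.cong refl)
      fix w assume "w \<in> {w. u w \<noteq> 0}"
      then have uw: "u w \<noteq> 0" by simp
      have "Bminus (Z_word w :: 'k kT) = (if w \<noteq> [] \<and> last w = 1 then Z_word (butlast w) else (\<lambda>_. 0))"
        by (rule Bminus_Z_word[OF lett[OF uw]])
      from fun_cong[OF this, of r]
      show "u w * Bminus (Z_word w) r = (if w \<noteq> [] \<and> last w = 1 then u w * Z_word (butlast w) r else 0)"
        by (auto split: if_splits)
    qed
    also have "\<dots> = (\<Sum>w\<in>{w \<in> {w. u w \<noteq> 0}. w \<noteq> [] \<and> last w = 1}. u w * Z_word (butlast w) r)"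
      by (rule sum.inter_filter[OF fin, symmetric])
    also have "{w \<in> {w. u w \<noteq> 0}. w \<noteq> [] \<and> last w = 1} = ?snoc ` {v. u (v @ [1]) \<noteq> 0}"
    proof
      show "{w \<in> {w. u w \<noteq> 0}. w \<noteq> [] \<and> last w = 1} \<subseteq> ?snoc ` {v. u (v @ [1]) \<noteq> 0}"
      proof
        fix w assume "w \<in> {w \<in> {w. u w \<noteq> 0}. w \<noteq> [] \<and> last w = 1}"
        then have w: "u w \<noteq> 0" "w \<noteq> []" "last w = 1" by auto
        then have "w = butlast w @ [1]" by (metis append_butlast_last_id)
        then show "w \<in> ?snoc ` {v. u (v @ [1]) \<noteq> 0}" using w(1) by (metis (mono_tags, lifting) image_eqI mem_Collect_eq)
      qed
      show "?snoc ` {v. u (v @ [1]) \<noteq> 0} \<subseteq> {w \<in> {w. u w \<noteq> 0}. w \<noteq> [] \<and> last w = 1}" by auto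
    qed
    also have "(\<Sum>w\<in>?snoc ` {v. u (v @ [1]) \<noteq> 0}. u w * Z_word (butlast w) r) = (\<Sum>v\<in>{v. u (v @ [1]) \<noteq> 0}. u (v @ [1]) * Z_word v r)"
      by (subst sum.reindex) (use inj_snoc in \<open>auto simp: inj_on_def\<close>)
    also have "\<dots> = Z (alpha_plus u) r" by (simp add: Z_def alpha_plus_def)
    finally show "Z (alpha_plus u) r = Bminus (Pi_proj (Z u)) r" by simp
  qed
  have P2: "Z (alpha_minus u) = Z u \<circ>\<^sub>G\<^sub>L eps 1"
  proof -
    have "Z u \<circ>\<^sub>G\<^sub>L eps 1 = (\<lambda>r. \<Sum>w\<in>{w. u w \<noteq> 0}. u w * gl (Z_word w) (eps 1) r)"
      unfolding Z_def by (rule gl_lin1) (use fin in \<open>auto intro: finsupp_Z_word finsupp_eps\<close>)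
    also have "\<dots> = (\<lambda>r. \<Sum>w\<in>{w. u w \<noteq> 0}. u w * Z_word (w @ [1]) r)"
      by (simp only: Z_word_snoc)
    also have "\<dots> = Z (alpha_minus u)"
    proof
      fix r
      have s: "{w. alpha_minus u w \<noteq> 0} = ?snoc ` {w. u w \<noteq> 0}"
      proof
        show "{w. alpha_minus u w \<noteq> 0} \<subseteq> ?snoc ` {w. u w \<noteq> 0}"
        proof
          fix w assume "w \<in> {w. alpha_minus u w \<noteq> 0}"
          then have w: "w \<noteq> []" "last w = 1" "u (butlast w) \<noteq> 0" by (auto simp: alpha_minus_def split: if_splits)
          then have "w = butlast w @ [1]" by (metis append_butlast_last_id)
          then show "w \<in> ?snoc ` {w. u w \<noteq> 0}" using w(3) by blast
        qed
        show "?snoc ` {w. u w \<noteq> 0} \<subseteq> {w. alpha_minus u w \<noteq> 0}" by (auto simp: alpha_minus_def)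
      qed
      have "Z (alpha_minus u) r = (\<Sum>w\<in>?snoc ` {w. u w \<noteq> 0}. alpha_minus u w * Z_word w r)"
        unfolding Z_def s ..
      also have "\<dots> = (\<Sum>w\<in>{w. u w \<noteq> 0}. u w * Z_word (w @ [1]) r)"
        by (subst sum.reindex) (use inj_snoc in \<open>auto simp: inj_on_def alpha_minus_def\<close>)
      finally show "(\<Sum>w\<in>{w. u w \<noteq> 0}. u w * Z_word (w @ [1]) r) = Z (alpha_minus u) r" by simp
    qed
    finally show ?thesis by simp
  qed
  have P3: "Z u \<circ>\<^sub>G\<^sub>L eps 1 = Z u \<circ>\<^sub>G\<^sub>L basis (ladder 2)"
    by (simp only: eps_1)
  show ?thesis using P1 P2 P3 by (simp only: simp_thms)
qed


end
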